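(* For every $t \in \mathbb{N}_0$ and every integer $b \ge 3$, the cyclotomic polynomial $\Phi_b(x)$ does not divide \begin{align*} R_t(x) = {}& x^{8t+15} + x^{8t+14} + x^{8t+11} - x^{8t+10} - x^{8t+8} + 2x^{6t+9} - x^{4t+15} - x^{4t+11} - x^{4t+9} + 2x^{4t+8} \\ & - 2x^{4t+7} + x^{4t+6} + x^{4t+4} + x^{4t} - 2x^{2t+6} + x^7 + x^5 - x^4 - x - 1. \end{align*}
   Context: $\Phi_b(x) = \prod_\zeta (x-\zeta)$, where $\zeta$ ranges over the primitive $b$-th roots of unity, is the $b$-th cyclotomic polynomial. *)

theory Defs
  imports "HOL-Computational_Algebra.Polynomial"
begin

definition primitive_root_of_unity :: "nat \<Rightarrow> complex \<Rightarrow> bool" where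
  "primitive_root_of_unity b z \<longleftrightarrow> 0 < b \<and> z ^ b = 1 \<and> (\<forall>k. 0 < k \<and> k < b \<longrightarrow> z ^ k \<noteq> 1)"

definition cyclotomic :: "nat \<Rightarrow> complex poly" where
  "cyclotomic b = (\<Prod>z\<in>{z. primitive_root_of_unity b z}. [:- z, 1:])"

definition R :: "nat \<Rightarrow> int poly" where
  "R t = monom 1 (8*t+15) + monom 1 (8*t+14) + monom 1 (8*t+11) - monom 1 (8*t+10)
       - monom 1 (8*t+8) + monom 2 (6*t+9) - monom 1 (4*t+15) - monom 1 (4*t+11)
       - monom 1 (4*t+9) + monom 2 (4*t+8) - monom 2 (4*t+7) + monom 1 (4*t+6)
       + monom 1 (4*t+4) + monom 1 (4*t) - monom 2 (2*t+6) + monom 1 7 + monom 1 5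
       - monom 1 4 - monom 1 1 - 1"

end

theory Submission
  imports Defs "Jordan_Normal_Form.Char_Poly"
begin


inductive_set zr :: "complex \<Rightarrow> complex set" for z :: complex where
  zr_int: "of_int k \<in> zr z"
| zr_z: "z \<in> zr z"
| zr_add: "a \<in> zr z \<Longrightarrow> b \<in> zr z \<Longrightarrow> a + b \<in> zr z"
| zr_mult: "a \<in> zr z \<Longrightarrow> b \<in> zr z \<Longrightarrow> a * b \<in> zr z"

lemma zr_0[simp,intro]: "0 \<in> zr z" using zr_int[of 0] by simp
lemma zr_1[simp,intro]: "1 \<in> zr z" using zr_int[of 1] by simp
lemma zr_nat[simp,intro]: "of_nat n \<in> zr z" using zr_int[of "int n"] by simp
lemma zr_numeral[simp,intro]: "numeral n \<in> zr z" using zr_int[of "numeral n"] by simp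
lemma zr_uminus: "a \<in> zr z \<Longrightarrow> - a \<in> zr z"
  using zr_mult[OF zr_int[of "-1"], of a] by simp
lemma zr_diff: "a \<in> zr z \<Longrightarrow> b \<in> zr z \<Longrightarrow> a - b \<in> zr z"
  using zr_add[of a z "- b"] zr_uminus by auto
lemma zr_power: "a \<in> zr z \<Longrightarrow> a ^ n \<in> zr z"
  by (induction n) (auto intro: zr_mult)
lemma zr_sum: "(\<And>i. i \<in> A \<Longrightarrow> f i \<in> zr z) \<Longrightarrow> sum f A \<in> zr z"
  by (induction A rule: infinite_finite_induct) (auto intro: zr_add)
lemma zr_prod: "(\<And>i. i \<in> A \<Longrightarrow> f i \<in> zr z) \<Longrightarrow> prod f A \<in> zr z"
  by (induction A rule: infinite_finite_induct) (auto intro: zr_mult)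

definition cg :: "int \<Rightarrow> complex \<Rightarrow> complex \<Rightarrow> complex \<Rightarrow> bool" where
  "cg p z u v \<longleftrightarrow> (\<exists>w\<in>zr z. u - v = of_int p * w)"

lemma cg_refl[simp,intro]: "cg p z u u"
  unfolding cg_def by (intro bexI[of _ 0]) auto
lemma cg_sym: "cg p z u v \<Longrightarrow> cg p z v u"
  unfolding cg_def by (auto intro!: bexI[of _ "- _"] zr_uminus simp: algebra_simps)
lemma cg_trans: "cg p z u v \<Longrightarrow> cg p z v w \<Longrightarrow> cg p z u w"
  unfolding cg_def
proof (elim bexE)
  fix a b assume "a \<in> zr z" "u - v = of_int p * a" "b \<in> zr z" "v - w = of_int p * b"
  thus "\<exists>c\<in>zr z. u - w = of_int p * c" by (intro bexI[of _ "a + b"]) (auto simp: algebra_simps zr_add)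
qed
lemma cg_add: "cg p z u u' \<Longrightarrow> cg p z v v' \<Longrightarrow> cg p z (u + v) (u' + v')"
  unfolding cg_def
proof (elim bexE)
  fix a b assume "a \<in> zr z" "u - u' = of_int p * a" "b \<in> zr z" "v - v' = of_int p * b"
  thus "\<exists>c\<in>zr z. u + v - (u' + v') = of_int p * c" by (intro bexI[of _ "a + b"]) (auto simp: algebra_simps zr_add)
qed
lemma cg_mult: "cg p z u u' \<Longrightarrow> cg p z v v' \<Longrightarrow> u' \<in> zr z \<Longrightarrow> v \<in> zr z \<Longrightarrow> cg p z (u * v) (u' * v')"
  unfolding cg_def
proof (elim bexE)
  fix a b assume *: "a \<in> zr z" "u - u' = of_int p * a" "b \<in> zr z" "v - v' = of_int p * b"
    "u' \<in> zr z" "v \<in> zr z"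
  have "u * v - u' * v' = (u - u') * v + u' * (v - v')" by (simp add: algebra_simps)
  also have "\<dots> = of_int p * (a * v + u' * b)" using * by (simp add: algebra_simps)
  finally show "\<exists>c\<in>zr z. u * v - u' * v' = of_int p * c" using * by (intro bexI[of _ "a * v + u' * b"]) (auto intro: zr_add zr_mult)
qed
lemma cg_mult_left: "cg p z u u' \<Longrightarrow> a \<in> zr z \<Longrightarrow> cg p z (a * u) (a * u')"
  unfolding cg_def
proof (elim bexE)
  fix w assume "w \<in> zr z" "u - u' = of_int p * w" "a \<in> zr z"
  thus "\<exists>c\<in>zr z. a * u - a * u' = of_int p * c"
    by (intro bexI[of _ "a * w"]) (auto simp: algebra_simps zr_mult simp flip: right_diff_distrib)
qed
lemma cg_zero_mult: "cg p z u 0 \<Longrightarrow> a \<in> zr z \<Longrightarrow> cg p z (a * u) 0"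
  using cg_mult_left[of p z u 0 a] by simp
lemma cg_eq: "u = v \<Longrightarrow> cg p z u v" by simp
lemma cg_int: "p dvd (a - b) \<Longrightarrow> cg p z (of_int a) (of_int b)"
  unfolding cg_def by (auto elim!: dvdE intro!: bexI[of _ "of_int _"] zr_int simp flip: of_int_diff of_int_mult)

definition rp :: "nat \<Rightarrow> complex \<Rightarrow> complex \<Rightarrow> bool" where
  "rp n z a \<longleftrightarrow> (\<exists>f. a = (\<Sum>j<n. of_int (f j) * z ^ j))"

context
  fixes n :: nat and z :: complex
  assumes n: "n > 0" and zn: "z ^ n = 1"
begin

lemma rp_int: "rp n z (of_int k)"
proof -
  have "(\<Sum>j<n. of_int (if j = 0 then k else 0) * z ^ j) = (\<Sum>j<n. if j = 0 then of_int k else 0)"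
    by (intro sum.cong) auto
  also have "\<dots> = of_int k" using n by (simp add: sum.delta)
  finally show ?thesis unfolding rp_def by (intro exI[of _ "\<lambda>j. if j = 0 then k else 0"]) simp
qed

lemma rp_add: "rp n z a \<Longrightarrow> rp n z b \<Longrightarrow> rp n z (a + b)"
proof -
  assume "rp n z a" "rp n z b"
  then obtain f g where a: "a = (\<Sum>j<n. of_int (f j) * z ^ j)" and b: "b = (\<Sum>j<n. of_int (g j) * z ^ j)"
    unfolding rp_def by blast
  have "a + b = (\<Sum>j<n. of_int (f j + g j) * z ^ j)" unfolding a b by (simp add: sum.distrib algebra_simps)
  thus ?thesis unfolding rp_def by (rule exI[of _ "\<lambda>j. f j + g j"])
qed

lemma rp_scale: "rp n z a \<Longrightarrow> rp n z (of_int c * a)"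
proof -
  assume "rp n z a"
  then obtain f where a: "a = (\<Sum>j<n. of_int (f j) * z ^ j)" unfolding rp_def by blast
  have "of_int c * a = (\<Sum>j<n. of_int (c * f j) * z ^ j)" unfolding a by (simp add: sum_distrib_left algebra_simps)
  thus ?thesis unfolding rp_def by (rule exI[of _ "\<lambda>j. c * f j"])
qed

lemma rp_sum: "(\<And>i. i \<in> A \<Longrightarrow> rp n z (f i)) \<Longrightarrow> rp n z (sum f A)"
  by (induction A rule: infinite_finite_induct) (auto intro: rp_add simp: rp_int[of 0, simplified])

lemma rp_timesz: "rp n z a \<Longrightarrow> rp n z (a * z)"
proof -
  assume "rp n z a"
  then obtain f where a: "a = (\<Sum>j<n. of_int (f j) * z ^ j)" unfolding rp_def by blast
  obtain m where m: "n = Suc m" using n by (cases n) auto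
  define g where "g = (\<lambda>j. if j = 0 then f m else f (j - 1))"
  have "a * z = (\<Sum>j<Suc m. of_int (f j) * z ^ Suc j)"
    unfolding a m by (simp add: sum_distrib_right sum_distrib_left algebra_simps)
  also have "\<dots> = (\<Sum>j<m. of_int (f j) * z ^ Suc j) + of_int (f m)"
    using zn m by simp
  also have "\<dots> = (\<Sum>j<Suc m. of_int (g j) * z ^ j)"
    unfolding sum.lessThan_Suc_shift by (simp add: g_def)
  finally show ?thesis unfolding rp_def m by blast
qed

lemma rp_timeszpow: "rp n z a \<Longrightarrow> rp n z (a * z ^ k)"
proof (induction k)
  case (Suc k)
  then have "rp n z (a * z ^ k * z)" by (intro rp_timesz) auto
  thus ?case by (simp add: algebra_simps)
qed simp

lemma rp_mult: "rp n z a \<Longrightarrow> rp n z b \<Longrightarrow> rp n z (a * b)"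
proof -
  assume a: "rp n z a" and "rp n z b"
  then obtain g where b: "b = (\<Sum>j<n. of_int (g j) * z ^ j)" unfolding rp_def by blast
  have "a * b = (\<Sum>j<n. of_int (g j) * (a * z ^ j))"
    unfolding b by (simp add: sum_distrib_left algebra_simps)
  also have "rp n z \<dots>"
    by (intro rp_sum rp_scale rp_timeszpow a)
  finally show ?thesis .
qed

lemma rp_z: "rp n z z"
  using rp_timesz[OF rp_int[of 1]] by simp

lemma zr_rp: "a \<in> zr z \<Longrightarrow> rp n z a"
  by (induction rule: zr.induct) (auto intro: rp_int rp_z rp_add rp_mult)

lemma zr_algebraic_int:
  assumes "a \<in> zr z" shows "algebraic_int a"
proof -
  from zr_rp[OF assms] obtain f where a: "a = (\<Sum>j<n. of_int (f j) * z ^ j)" unfolding rp_def by blast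
  define M :: "int mat" where "M = mat n n (\<lambda>(i,j). f ((j + n - i) mod n))"
  define v :: "complex vec" where "v = vec n (\<lambda>j. z ^ j)"
  have M: "M \<in> carrier_mat n n" unfolding M_def by simp
  have Mc: "map_mat of_int M \<in> carrier_mat n n" using M by simp
  have zpow: "z ^ k = z ^ (k mod n)" for k
  proof -
    have "z ^ k = z ^ (n * (k div n) + k mod n)" by (simp only: mult_div_mod_eq)
    also have "\<dots> = z ^ (k mod n)" by (simp only: power_add power_mult zn power_one mult_1)
    finally show ?thesis .
  qed
  have row: "(\<Sum>j<n. of_int (f ((j + n - i) mod n)) * z ^ j) = z ^ i * a" if i: "i < n" for i
  proof -
    have inv: "((i + k) mod n + n - i) mod n = k" if k: "k < n" for k
    proof -
      have "int (((i + k) mod n + n - i) mod n) = ((int i + int k) mod int n + int n - int i) mod int n"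
        using i by (simp add: zmod_int of_nat_diff)
      also have "\<dots> = (int k) mod int n" by (simp add: group_cancel.sub1 mod_add_left_eq)
      also have "\<dots> = int k" using k by simp
      finally show ?thesis by simp
    qed
    have bij: "bij_betw (\<lambda>k. (i + k) mod n) {..<n} {..<n}"
    proof -
      have "inj_on (\<lambda>k. (i + k) mod n) {..<n}"
      proof (rule inj_onI)
        fix k l assume "k \<in> {..<n}" "l \<in> {..<n}" "(i + k) mod n = (i + l) mod n"
        then show "k = l" using inv by (metis lessThan_iff)
      qed
      moreover have "(\<lambda>k. (i + k) mod n) ` {..<n} \<subseteq> {..<n}" using n by auto
      ultimately show ?thesis by (simp add: bij_betw_def endo_inj_surj)
    qed
    have "(\<Sum>j<n. of_int (f ((j + n - i) mod n)) * z ^ j)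
        = (\<Sum>k<n. of_int (f (((i + k) mod n + n - i) mod n)) * z ^ ((i + k) mod n))"
      by (rule sum.reindex_bij_betw[OF bij, symmetric])
    also have "\<dots> = (\<Sum>k<n. of_int (f k) * z ^ (i + k))"
    proof (rule sum.cong[OF refl])
      fix k assume k: "k \<in> {..<n}"
      have "((i + k) mod n + n - i) mod n = k" using inv k by simp
      then show "of_int (f (((i + k) mod n + n - i) mod n)) * z ^ ((i + k) mod n) = of_int (f k) * z ^ (i + k)"
        using zpow[of "i + k"] by simp
    qed
    also have "\<dots> = z ^ i * a" unfolding a by (simp add: sum_distrib_left power_add algebra_simps)
    finally show ?thesis .
  qed
  have ev: "map_mat of_int M *\<^sub>v v = a \<cdot>\<^sub>v v"
  proof (rule eq_vecI)
    fix i assume "i < dim_vec (a \<cdot>\<^sub>v v)"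
    hence i: "i < n" by (simp add: v_def)
    have "(map_mat of_int M *\<^sub>v v) $ i = (\<Sum>j<n. of_int (f ((j + n - i) mod n)) * z ^ j)"
      using i by (simp add: M_def v_def mult_mat_vec_def scalar_prod_def lessThan_atLeast0)
    also have "\<dots> = a * z ^ i" using row[OF i] by simp
    finally show "(map_mat of_int M *\<^sub>v v) $ i = (a \<cdot>\<^sub>v v) $ i" using i by (simp add: v_def)
  qed (simp add: M_def v_def)
  have "v \<noteq> 0\<^sub>v n"
  proof
    assume "v = 0\<^sub>v n"
    hence "v $ 0 = 0" using n by simp
    thus False using n by (simp add: v_def)
  qed
  hence "eigenvalue (map_mat of_int M) a"
    unfolding eigenvalue_def eigenvector_def using ev Mc by (intro exI[of _ v]) (auto simp: v_def)
  hence root: "poly (char_poly (map_mat of_int M)) a = 0"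
    using eigenvalue_root_char_poly[OF Mc, of a] by blast
  have cp: "char_poly (map_mat of_int M :: complex mat) = map_poly of_int (char_poly M)"
    using of_int_hom.char_poly_hom[OF M] by simp
  have lc: "lead_coeff (char_poly M) = 1" using degree_monic_char_poly[OF M] by simp
  show ?thesis unfolding algebraic_int_altdef_ipoly using root cp lc by (intro exI[of _ "char_poly M"]) simp
qed

lemma integrality:
  assumes p: "prime p" and w: "w \<in> zr z" and eq: "of_int c = of_int p * w"
  shows "p dvd c"
proof -
  have pnz: "p \<noteq> 0" using p by auto
  have "w = of_int c / of_int p" using eq pnz by (simp add: field_simps)
  hence "w \<in> \<rat>" by simp
  moreover have "algebraic_int w" by (rule zr_algebraic_int[OF w])
  ultimately have "w \<in> \<int>" by (intro rational_algebraic_int_is_int)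
  then obtain m where "w = of_int m" by (auto elim: Ints_cases)
  with eq have "of_int c = (of_int (p * m) :: complex)" by simp
  hence "c = p * m" by (simp only: of_int_eq_iff)
  thus ?thesis by simp
qed

end



definition iv :: "nat \<Rightarrow> complex \<Rightarrow> complex \<Rightarrow> bool" where
  "iv p z u \<longleftrightarrow> (\<exists>H\<in>zr z. \<exists>c. \<not> int p dvd c \<and> u * H = of_int c)"

lemma iv_mult:
  assumes p: "prime p" and u: "iv p z u" and v: "iv p z v" shows "iv p z (u * v)"
proof -
  from u obtain H c where H: "H \<in> zr z" "\<not> int p dvd c" "u * H = of_int c" unfolding iv_def by blast
  from v obtain H' c' where H': "H' \<in> zr z" "\<not> int p dvd c'" "v * H' = of_int c'" unfolding iv_def by blast
  have pp: "prime (int p)" using p by simp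
  have "\<not> int p dvd c * c'" using H H' pp by (simp add: prime_dvd_mult_iff)
  moreover have "u * v * (H * H') = (u * H) * (v * H')" by (simp add: algebra_simps)
  hence "u * v * (H * H') = of_int (c * c')" using H H' by simp
  ultimately show ?thesis unfolding iv_def using H H' by (intro bexI[of _ "H * H'"]) (auto intro: zr_mult)
qed

lemma not_dvd_one: "prime p \<Longrightarrow> \<not> int p dvd 1"
  using prime_gt_1_nat[of p] by (simp add: zdvd1_eq)

lemma iv_one: "prime p \<Longrightarrow> iv p z 1"
  unfolding iv_def using not_dvd_one[of p] zr_1[of z] by (intro bexI[of _ 1] exI[of _ 1]) simp_all

lemma iv_power: "prime p \<Longrightarrow> iv p z u \<Longrightarrow> iv p z (u ^ k)"
  by (induction k) (auto intro: iv_mult iv_one)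

lemma iv_uminus: "iv p z u \<Longrightarrow> iv p z (- u)"
proof -
  assume "iv p z u"
  then obtain H c where H: "H \<in> zr z" "\<not> int p dvd c" "u * H = of_int c" unfolding iv_def by blast
  have "- u * - H = of_int c" using H by simp
  thus ?thesis unfolding iv_def using H zr_uminus[OF H(1)] by blast
qed

lemma iv_factor: "iv p z (u * v) \<Longrightarrow> v \<in> zr z \<Longrightarrow> iv p z u"
proof -
  assume "iv p z (u * v)" "v \<in> zr z"
  then obtain H c where H: "H \<in> zr z" "\<not> int p dvd c" "u * v * H = of_int c" "v \<in> zr z" unfolding iv_def by blast
  have "u * (v * H) = of_int c" using H by (simp add: mult.assoc)
  thus ?thesis unfolding iv_def using H zr_mult[OF H(4) H(1)] by blast
qed

lemma iv_root:
  assumes p: "prime p" and w: "w \<in> zr z" and wn: "w ^ n = 1" and n: "n > 0"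
  shows "iv p z w"
proof -
  have "w * w ^ (n - 1) = of_int 1" using wn n by (cases n) auto
  moreover have "\<not> int p dvd 1" using not_dvd_one[OF p] .
  ultimately show ?thesis unfolding iv_def using w zr_power[OF w, of "n - 1"] by blast
qed

lemma geom: "(1 - w) * (\<Sum>j<m. w ^ j) = 1 - (w::complex) ^ m"
  by (rule one_diff_power_eq[symmetric])

lemma geom2: "(1 - w) * (\<Sum>j<m. of_nat j * w ^ j) + of_nat m * w ^ m + 1 = (\<Sum>j<m. w ^ j) + (w::complex) ^ m"
  by (induction m) (auto simp: algebra_simps)

lemma iv_unit:
  assumes p: "prime p" and w: "w \<in> zr z" and wN: "w ^ N \<noteq> 1" and wNm: "w ^ (N * m) = 1"
    and m: "m > 0" and pm: "\<not> p dvd m"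
  shows "iv p z (1 - w)"
proof -
  define u where "u = w ^ N"
  have u1: "u \<noteq> 1" using wN by (simp add: u_def)
  have um: "u ^ m = 1" using wNm by (simp add: u_def power_mult)
  have s0: "(\<Sum>j<m. u ^ j) = 0" using geom[of u m] um u1 by simp
  have key: "(1 - u) * (- (\<Sum>j<m. of_nat j * u ^ j)) = of_nat m"
    using geom2[of u m] s0 um by (simp add: algebra_simps)
  have fac: "1 - u = (1 - w) * (\<Sum>i<N. w ^ i)" using geom[of w N] by (simp add: u_def)
  define H where "H = (\<Sum>i<N. w ^ i) * (- (\<Sum>j<m. of_nat j * u ^ j))"
  have "(1 - w) * H = of_int (int m)" using key fac by (simp add: H_def algebra_simps)
  moreover have "H \<in> zr z" unfolding H_def u_def using w
    by (intro zr_mult zr_uminus zr_sum zr_power) (auto intro: zr_mult zr_power)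
  moreover have "\<not> int p dvd int m" using pm by simp
  ultimately show ?thesis unfolding iv_def by blast
qed

lemma iv_order:
  assumes p: "prime p" and w: "w \<in> zr z" and ord: "\<And>k. w ^ k = 1 \<longleftrightarrow> r dvd k"
    and r: "r = p ^ c * m" and pm: "\<not> p dvd m" and m: "m > 1"
  shows "iv p z (1 - w)"
proof (rule iv_unit[OF p w _ _ _ pm, of "p ^ c"])
  show "w ^ p ^ c \<noteq> 1"
  proof
    assume "w ^ p ^ c = 1"
    hence "p ^ c * m dvd p ^ c * 1" using ord r by simp
    hence "m dvd 1" using p by (auto simp: prime_gt_0_nat)
    thus False using m by simp
  qed
  show "w ^ (p ^ c * m) = 1" using ord r by simp
qed (use m in auto)

lemma final_contra:
  assumes z: "z ^ n = 1" "n > 0" and p: "prime p" and X: "cg (int p) z X 0" and iv: "iv p z X"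
  shows False
proof -
  from X obtain w where w: "w \<in> zr z" "X = of_int (int p) * w" unfolding cg_def by auto
  from iv obtain H c where H: "H \<in> zr z" "\<not> int p dvd c" "X * H = of_int c" unfolding iv_def by blast
  have "of_int c = of_int (int p) * (w * H)" using w H by (simp add: algebra_simps)
  hence "int p dvd c" using integrality[OF z(2) z(1) _ zr_mult[OF w(1) H(1)]] p by simp
  thus False using H by simp
qed

lemma prim_iff: assumes "primitive_root_of_unity b z" shows "z ^ k = 1 \<longleftrightarrow> b dvd k"
proof -
  from assms have b: "b > 0" and zb: "z ^ b = 1" and nz: "\<And>k. 0 < k \<Longrightarrow> k < b \<Longrightarrow> z ^ k \<noteq> 1"
    unfolding primitive_root_of_unity_def by auto
  have "z ^ k = z ^ (k mod b)"
  proof -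
    have "z ^ k = z ^ (b * (k div b) + k mod b)" by (simp only: mult_div_mod_eq)
    also have "\<dots> = z ^ (k mod b)" by (simp only: power_add power_mult zb power_one mult_1)
    finally show ?thesis .
  qed
  moreover have "k mod b < b" using b by simp
  ultimately show ?thesis using nz[of "k mod b"] by (cases "k mod b = 0") (auto simp: dvd_eq_mod_eq_0)
qed

lemma primI: assumes "b > 0" "\<And>k. z ^ k = 1 \<longleftrightarrow> b dvd k" shows "primitive_root_of_unity b z"
  unfolding primitive_root_of_unity_def using assms by (auto dest: dvd_imp_le)

lemma prim_pow: assumes "primitive_root_of_unity b z" "coprime a b"
  shows "primitive_root_of_unity b (z ^ a)"
proof (rule primI)
  show "b > 0" using assms unfolding primitive_root_of_unity_def by auto
  fix k show "(z ^ a) ^ k = 1 \<longleftrightarrow> b dvd k"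
    using prim_iff[OF assms(1), of "a * k"] assms(2)
    by (simp add: power_mult coprime_dvd_mult_right_iff coprime_commute)
qed

lemma prim_exists: assumes "b > 0" shows "\<exists>z. primitive_root_of_unity b z"
proof -
  define z where "z = cis (2 * pi / real b)"
  have bij: "bij_betw (\<lambda>k. cis (2 * pi * real k / real b)) {..<b} {z. z ^ b = 1}"
    by (rule bij_betw_roots_unity) (use assms in auto)
  have zk: "z ^ k = cis (2 * pi * real k / real b)" for k
    unfolding z_def DeMoivre by (simp add: field_simps)
  show ?thesis
  proof (intro exI[of _ z] primI[OF assms])
    fix k
    have "z ^ k = z ^ (k mod b)"
    proof -
      have zb: "z ^ b = 1" using zk[of b] assms by simp
      have "z ^ k = z ^ (b * (k div b) + k mod b)" by (simp only: mult_div_mod_eq)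
      also have "\<dots> = z ^ (k mod b)" by (simp only: power_add power_mult zb power_one mult_1)
      finally show ?thesis .
    qed
    also have "\<dots> = 1 \<longleftrightarrow> k mod b = 0"
    proof
      assume "z ^ (k mod b) = 1"
      hence "cis (2 * pi * real (k mod b) / real b) = cis (2 * pi * real 0 / real b)" using zk by simp
      moreover have "k mod b \<in> {..<b}" "0 \<in> {..<b}" using assms by auto
      ultimately show "k mod b = 0" using bij unfolding bij_betw_def inj_on_def by blast
    qed simp
    finally show "z ^ k = 1 \<longleftrightarrow> b dvd k" by (simp add: dvd_eq_mod_eq_0)
  qed
qed

lemma R_root:
  assumes dv: "cyclotomic b dvd map_poly of_int (R t)" and z: "primitive_root_of_unity b z"
  shows "poly (map_poly of_int (R t)) z = (0::complex)"
proof -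
  have b: "b > 0" using z unfolding primitive_root_of_unity_def by auto
  have fin: "finite {z. primitive_root_of_unity b z}"
    by (rule finite_subset[OF _ finite_roots_unity[of b]]) (use b in \<open>auto simp: primitive_root_of_unity_def\<close>)
  have "poly (cyclotomic b) z = (\<Prod>w\<in>{z. primitive_root_of_unity b z}. z - w)"
    unfolding cyclotomic_def by (simp add: poly_prod)
  also have "\<dots> = 0" using fin z by (intro prod_zero) auto
  finally have c0: "poly (cyclotomic b) z = 0" .
  from dv obtain q where "map_poly of_int (R t) = cyclotomic b * q" by (auto elim: dvdE)
  thus ?thesis using c0 by simp
qed




datatype dig = D0 | D1 | D2 | D3 | D4

fun dv :: "dig \<Rightarrow> int" where
  "dv D0 = 0" | "dv D1 = 1" | "dv D2 = 2" | "dv D3 = 3" | "dv D4 = 4"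

fun a3 :: "dig \<Rightarrow> dig \<Rightarrow> dig" where
  "a3 D0 D0 = D0"
| "a3 D0 D1 = D1"
| "a3 D0 D2 = D2"
| "a3 D0 D3 = D0"
| "a3 D0 D4 = D1"
| "a3 D1 D0 = D1"
| "a3 D1 D1 = D2"
| "a3 D1 D2 = D0"
| "a3 D1 D3 = D1"
| "a3 D1 D4 = D2"
| "a3 D2 D0 = D2"
| "a3 D2 D1 = D0"
| "a3 D2 D2 = D1"
| "a3 D2 D3 = D2"
| "a3 D2 D4 = D0"
| "a3 D3 D0 = D0"
| "a3 D3 D1 = D1"
| "a3 D3 D2 = D2"
| "a3 D3 D3 = D0"
| "a3 D3 D4 = D1"
| "a3 D4 D0 = D1"
| "a3 D4 D1 = D2"
| "a3 D4 D2 = D0"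
| "a3 D4 D3 = D1"
| "a3 D4 D4 = D2"

fun m3 :: "dig \<Rightarrow> dig \<Rightarrow> dig" where
  "m3 D0 D0 = D0"
| "m3 D0 D1 = D0"
| "m3 D0 D2 = D0"
| "m3 D0 D3 = D0"
| "m3 D0 D4 = D0"
| "m3 D1 D0 = D0"
| "m3 D1 D1 = D1"
| "m3 D1 D2 = D2"
| "m3 D1 D3 = D0"
| "m3 D1 D4 = D1"
| "m3 D2 D0 = D0"
| "m3 D2 D1 = D2"
| "m3 D2 D2 = D1"
| "m3 D2 D3 = D0"
| "m3 D2 D4 = D2"
| "m3 D3 D0 = D0"
| "m3 D3 D1 = D0"
| "m3 D3 D2 = D0"
| "m3 D3 D3 = D0"
| "m3 D3 D4 = D0"
| "m3 D4 D0 = D0"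
| "m3 D4 D1 = D1"
| "m3 D4 D2 = D2"
| "m3 D4 D3 = D0"
| "m3 D4 D4 = D1"

fun n3 :: "dig \<Rightarrow> dig" where
  "n3 D0 = D0"
| "n3 D1 = D2"
| "n3 D2 = D1"
| "n3 D3 = D0"
| "n3 D4 = D2"

fun a5 :: "dig \<Rightarrow> dig \<Rightarrow> dig" where
  "a5 D0 D0 = D0"
| "a5 D0 D1 = D1"
| "a5 D0 D2 = D2"
| "a5 D0 D3 = D3"
| "a5 D0 D4 = D4"
| "a5 D1 D0 = D1"
| "a5 D1 D1 = D2"
| "a5 D1 D2 = D3"
| "a5 D1 D3 = D4"
| "a5 D1 D4 = D0"
| "a5 D2 D0 = D2"
| "a5 D2 D1 = D3"
| "a5 D2 D2 = D4"
| "a5 D2 D3 = D0"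
| "a5 D2 D4 = D1"
| "a5 D3 D0 = D3"
| "a5 D3 D1 = D4"
| "a5 D3 D2 = D0"
| "a5 D3 D3 = D1"
| "a5 D3 D4 = D2"
| "a5 D4 D0 = D4"
| "a5 D4 D1 = D0"
| "a5 D4 D2 = D1"
| "a5 D4 D3 = D2"
| "a5 D4 D4 = D3"

fun m5 :: "dig \<Rightarrow> dig \<Rightarrow> dig" where
  "m5 D0 D0 = D0"
| "m5 D0 D1 = D0"
| "m5 D0 D2 = D0"
| "m5 D0 D3 = D0"
| "m5 D0 D4 = D0"
| "m5 D1 D0 = D0"
| "m5 D1 D1 = D1"
| "m5 D1 D2 = D2"
| "m5 D1 D3 = D3"
| "m5 D1 D4 = D4"
| "m5 D2 D0 = D0"
| "m5 D2 D1 = D2"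
| "m5 D2 D2 = D4"
| "m5 D2 D3 = D1"
| "m5 D2 D4 = D3"
| "m5 D3 D0 = D0"
| "m5 D3 D1 = D3"
| "m5 D3 D2 = D1"
| "m5 D3 D3 = D4"
| "m5 D3 D4 = D2"
| "m5 D4 D0 = D0"
| "m5 D4 D1 = D4"
| "m5 D4 D2 = D3"
| "m5 D4 D3 = D2"
| "m5 D4 D4 = D1"

fun n5 :: "dig \<Rightarrow> dig" where
  "n5 D0 = D0"
| "n5 D1 = D4"
| "n5 D2 = D3"
| "n5 D3 = D2"
| "n5 D4 = D1"

definition red3 :: "int \<Rightarrow> dig" where
  "red3 k = (if k mod 3 = 0 then D0 else if k mod 3 = 1 then D1 else D2)"
definition red5 :: "int \<Rightarrow> dig" where
  "red5 k = (if k mod 5 = 0 then D0 else if k mod 5 = 1 then D1 else if k mod 5 = 2 then D2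
             else if k mod 5 = 3 then D3 else D4)"

definition okops :: "nat \<Rightarrow> (dig \<Rightarrow> dig \<Rightarrow> dig) \<Rightarrow> (dig \<Rightarrow> dig \<Rightarrow> dig) \<Rightarrow> (dig \<Rightarrow> dig) \<Rightarrow> (int \<Rightarrow> dig) \<Rightarrow> bool" where
  "okops p f g n rd \<longleftrightarrow> prime p \<and> (\<forall>a b. int p dvd dv (f a b) - (dv a + dv b))
     \<and> (\<forall>a b. int p dvd dv (g a b) - dv a * dv b) \<and> (\<forall>a. int p dvd dv (n a) + dv a)
     \<and> (\<forall>k. int p dvd dv (rd k) - k) \<and> dv D0 = 0"

lemma okops3: "okops 3 a3 m3 n3 red3"
proof -
  have "\<forall>a b. 3 dvd dv (a3 a b) - (dv a + dv b)" by (intro allI, case_tac a; case_tac b; simp)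
  moreover have "\<forall>a b. 3 dvd dv (m3 a b) - dv a * dv b" by (intro allI, case_tac a; case_tac b; simp)
  moreover have "\<forall>a. 3 dvd dv (n3 a) + dv a" by (intro allI, case_tac a; simp)
  moreover have "\<forall>k. (3::int) dvd dv (red3 k) - k"
  proof
    fix k :: int
    have "k mod 3 = 0 \<or> k mod 3 = 1 \<or> k mod 3 = 2" by arith
    moreover have "(3::int) dvd i - k \<longleftrightarrow> i mod 3 = k mod 3" for i by (simp add: mod_eq_dvd_iff)
    ultimately show "3 dvd dv (red3 k) - k" unfolding red3_def by auto
  qed
  ultimately show ?thesis unfolding okops_def by simp
qed

lemma prime5: "prime (5::nat)"
proof -
  have "{2..<5::nat} = {2,3,4}" by auto
  thus ?thesis by (simp add: prime_nat_iff')
qed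

lemma okops5: "okops 5 a5 m5 n5 red5"
proof -
  have "\<forall>a b. 5 dvd dv (a5 a b) - (dv a + dv b)" by (intro allI, case_tac a; case_tac b; simp)
  moreover have "\<forall>a b. 5 dvd dv (m5 a b) - dv a * dv b" by (intro allI, case_tac a; case_tac b; simp)
  moreover have "\<forall>a. 5 dvd dv (n5 a) + dv a" by (intro allI, case_tac a; simp)
  moreover have "\<forall>k. (5::int) dvd dv (red5 k) - k"
  proof
    fix k :: int
    have "k mod 5 = 0 \<or> k mod 5 = 1 \<or> k mod 5 = 2 \<or> k mod 5 = 3 \<or> k mod 5 = 4" by arith
    moreover have "(5::int) dvd i - k \<longleftrightarrow> i mod 5 = k mod 5" for i by (simp add: mod_eq_dvd_iff)
    ultimately show "5 dvd dv (red5 k) - k" unfolding red5_def by auto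
  qed
  ultimately show ?thesis unfolding okops_def using prime5 by simp
qed

fun padd :: "(dig \<Rightarrow> dig \<Rightarrow> dig) \<Rightarrow> dig list \<Rightarrow> dig list \<Rightarrow> dig list" where
  "padd f [] ys = ys"
| "padd f (x#xs) [] = x#xs"
| "padd f (x#xs) (y#ys) = f x y # padd f xs ys"

fun smul :: "(dig \<Rightarrow> dig \<Rightarrow> dig) \<Rightarrow> dig \<Rightarrow> dig list \<Rightarrow> dig list" where
  "smul g a [] = []"
| "smul g a (y#ys) = g a y # smul g a ys"

fun pmul :: "(dig \<Rightarrow> dig \<Rightarrow> dig) \<Rightarrow> (dig \<Rightarrow> dig \<Rightarrow> dig) \<Rightarrow> dig list \<Rightarrow> dig list \<Rightarrow> dig list" where
  "pmul f g [] ys = []"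
| "pmul f g (a#xs) ys = (if a = D0 then D0 # pmul f g xs ys else padd f (smul g a ys) (D0 # pmul f g xs ys))"

fun bpadd :: "(dig \<Rightarrow> dig \<Rightarrow> dig) \<Rightarrow> dig list list \<Rightarrow> dig list list \<Rightarrow> dig list list" where
  "bpadd f [] ys = ys"
| "bpadd f (x#xs) [] = x#xs"
| "bpadd f (x#xs) (y#ys) = padd f x y # bpadd f xs ys"

fun bpmul :: "(dig \<Rightarrow> dig \<Rightarrow> dig) \<Rightarrow> (dig \<Rightarrow> dig \<Rightarrow> dig) \<Rightarrow> dig list list \<Rightarrow> dig list list \<Rightarrow> dig list list" where
  "bpmul f g [] ys = []"
| "bpmul f g (r#xs) ys = bpadd f (map (pmul f g r) ys) ([] # bpmul f g xs ys)"

fun trimd :: "dig list \<Rightarrow> dig list" where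
  "trimd [] = []"
| "trimd (c#cs) = (let r = trimd cs in if r = [] \<and> c = D0 then [] else c # r)"

fun spread :: "nat \<Rightarrow> 'a \<Rightarrow> 'a list \<Rightarrow> 'a list" where
  "spread k z [] = []"
| "spread k z [c] = [c]"
| "spread k z (c#d#cs) = c # replicate (k - 1) z @ spread k z (d#cs)"

fun altd :: "(dig \<Rightarrow> dig) \<Rightarrow> dig list \<Rightarrow> dig list" where
  "altd n [] = []"
| "altd n [c] = [c]"
| "altd n (c#d#cs) = c # n d # altd n cs"

fun alti :: "int list \<Rightarrow> int list" where
  "alti [] = []"
| "alti [c] = [c]"
| "alti (c#d#cs) = c # (- d) # alti cs"

fun evF :: "dig list \<Rightarrow> complex \<Rightarrow> complex" where
  "evF [] x = 0"
| "evF (c#cs) x = of_int (dv c) + x * evF cs x"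

fun ev2 :: "dig list list \<Rightarrow> complex \<Rightarrow> complex \<Rightarrow> complex" where
  "ev2 [] x y = 0"
| "ev2 (r#rs) x y = evF r x + y * ev2 rs x y"

fun evI :: "int list \<Rightarrow> complex \<Rightarrow> complex" where
  "evI [] x = 0"
| "evI (c#cs) x = of_int c + x * evI cs x"

fun evI2 :: "int list list \<Rightarrow> complex \<Rightarrow> complex \<Rightarrow> complex" where
  "evI2 [] x y = 0"
| "evI2 (r#rs) x y = evI r x + y * evI2 rs x y"

lemma evF_zr: "x \<in> zr z \<Longrightarrow> evF cs x \<in> zr z"
  by (induction cs) (auto intro!: zr_add zr_mult zr_int)
lemma ev2_zr: "x \<in> zr z \<Longrightarrow> y \<in> zr z \<Longrightarrow> ev2 rs x y \<in> zr z"
  by (induction rs) (auto intro!: zr_add zr_mult evF_zr)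

context
  fixes p f g n rd
  assumes ok: "okops p f g n rd"
begin

lemma okf: "int p dvd dv (f a b) - (dv a + dv b)" using ok unfolding okops_def by blast
lemma okg: "int p dvd dv (g a b) - dv a * dv b" using ok unfolding okops_def by blast
lemma okn: "int p dvd dv (n a) + dv a" using ok unfolding okops_def by blast
lemma okrd: "int p dvd dv (rd k) - k" using ok unfolding okops_def by blast
lemma okp: "prime p" using ok unfolding okops_def by blast

lemma padd_cg: "x \<in> zr z \<Longrightarrow> cg (int p) z (evF (padd f xs ys) x) (evF xs x + evF ys x)"
proof (induction xs arbitrary: ys)
  case (Cons a xs ys0)
  show ?case
  proof (cases ys0)
    case (Cons b ys)
    note IH = Cons.IH[of ys]
  have "cg (int p) z (of_int (dv (f a b))) (of_int (dv a + dv b))" by (rule cg_int) (use okf in simp)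
  moreover have "cg (int p) z (x * evF (padd f xs ys) x) (x * (evF xs x + evF ys x))"
    using IH Cons.prems by (intro cg_mult_left) auto
  ultimately have "cg (int p) z (of_int (dv (f a b)) + x * evF (padd f xs ys) x) (of_int (dv a + dv b) + x * (evF xs x + evF ys x))"
    by (rule cg_add)
  thus ?thesis using Cons by (simp add: algebra_simps)
  qed simp
qed simp
lemma smul_cg: "x \<in> zr z \<Longrightarrow> cg (int p) z (evF (smul g a ys) x) (of_int (dv a) * evF ys x)"
proof (induction ys)
  case (Cons b ys)
  have "cg (int p) z (of_int (dv (g a b))) (of_int (dv a * dv b))" by (rule cg_int) (use okg in simp)
  moreover have "cg (int p) z (x * evF (smul g a ys) x) (x * (of_int (dv a) * evF ys x))"
    using Cons by (intro cg_mult_left) auto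
  ultimately have "cg (int p) z (of_int (dv (g a b)) + x * evF (smul g a ys) x) (of_int (dv a * dv b) + x * (of_int (dv a) * evF ys x))"
    by (rule cg_add)
  thus ?case by (simp add: algebra_simps)
qed simp

lemma pmul_cg: "x \<in> zr z \<Longrightarrow> cg (int p) z (evF (pmul f g xs ys) x) (evF xs x * evF ys x)"
proof (induction xs)
  case Nil thus ?case by simp
next
  case (Cons a xs)
  have IH: "cg (int p) z (x * evF (pmul f g xs ys) x) (x * (evF xs x * evF ys x))"
    using Cons by (intro cg_mult_left) auto
  show ?case
  proof (cases "a = D0")
    case True
    have "dv D0 = 0" using ok unfolding okops_def by blast
    thus ?thesis using IH True by (simp add: algebra_simps)
  next
    case False
    have "cg (int p) z (evF (padd f (smul g a ys) (D0 # pmul f g xs ys)) x)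
        (evF (smul g a ys) x + evF (D0 # pmul f g xs ys) x)" by (rule padd_cg) fact
    moreover have "cg (int p) z (evF (smul g a ys) x + evF (D0 # pmul f g xs ys) x)
        (of_int (dv a) * evF ys x + x * (evF xs x * evF ys x))"
    proof (rule cg_add)
      show "cg (int p) z (evF (smul g a ys) x) (of_int (dv a) * evF ys x)" by (rule smul_cg) fact
      have "dv D0 = 0" using ok unfolding okops_def by blast
      thus "cg (int p) z (evF (D0 # pmul f g xs ys) x) (x * (evF xs x * evF ys x))" using IH by simp
    qed
    ultimately show ?thesis using False by (auto simp: algebra_simps intro: cg_trans)
  qed
qed

lemma bpadd_cg: "x \<in> zr z \<Longrightarrow> y \<in> zr z \<Longrightarrow> cg (int p) z (ev2 (bpadd f xs ys) x y) (ev2 xs x y + ev2 ys x y)"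
proof (induction xs arbitrary: ys)
  case (Cons a xs ys0)
  show ?case
  proof (cases ys0)
    case (Cons b ys)
  have "cg (int p) z (evF (padd f a b) x) (evF a x + evF b x)" by (rule padd_cg) (use Cons.prems in auto)
  moreover have "cg (int p) z (y * ev2 (bpadd f xs ys) x y) (y * (ev2 xs x y + ev2 ys x y))"
    using Cons.IH[of ys] Cons.prems by (intro cg_mult_left) auto
  ultimately have "cg (int p) z (evF (padd f a b) x + y * ev2 (bpadd f xs ys) x y) (evF a x + evF b x + y * (ev2 xs x y + ev2 ys x y))"
    by (rule cg_add)
  thus ?thesis using Cons by (simp add: algebra_simps)
  qed simp
qed simp

lemma bmap_cg: "x \<in> zr z \<Longrightarrow> y \<in> zr z \<Longrightarrow> cg (int p) z (ev2 (map (pmul f g r) ys) x y) (evF r x * ev2 ys x y)"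
proof (induction ys)
  case (Cons q ys)
  have "cg (int p) z (evF (pmul f g r q) x) (evF r x * evF q x)" by (rule pmul_cg) fact
  moreover have "cg (int p) z (y * ev2 (map (pmul f g r) ys) x y) (y * (evF r x * ev2 ys x y))"
    using Cons by (intro cg_mult_left) auto
  ultimately have "cg (int p) z (evF (pmul f g r q) x + y * ev2 (map (pmul f g r) ys) x y) (evF r x * evF q x + y * (evF r x * ev2 ys x y))"
    by (rule cg_add)
  thus ?case by (simp add: algebra_simps)
qed simp

lemma bpmul_cg: "x \<in> zr z \<Longrightarrow> y \<in> zr z \<Longrightarrow> cg (int p) z (ev2 (bpmul f g xs ys) x y) (ev2 xs x y * ev2 ys x y)"
proof (induction xs)
  case (Cons r xs)
  have "cg (int p) z (ev2 (bpmul f g (r # xs) ys) x y) (ev2 (map (pmul f g r) ys) x y + ev2 ([] # bpmul f g xs ys) x y)"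
    unfolding bpmul.simps by (rule bpadd_cg) (use Cons.prems in auto)
  moreover have "cg (int p) z (ev2 (map (pmul f g r) ys) x y + ev2 ([] # bpmul f g xs ys) x y)
     (evF r x * ev2 ys x y + y * (ev2 xs x y * ev2 ys x y))"
  proof (rule cg_add)
    show "cg (int p) z (ev2 (map (pmul f g r) ys) x y) (evF r x * ev2 ys x y)" by (rule bmap_cg) (use Cons in auto)
    show "cg (int p) z (ev2 ([] # bpmul f g xs ys) x y) (y * (ev2 xs x y * ev2 ys x y))"
      using Cons by (simp add: cg_mult_left)
  qed
  ultimately show ?case by (auto simp: algebra_simps intro: cg_trans)
qed simp

lemma red_cg: "x \<in> zr z \<Longrightarrow> cg (int p) z (evF (map rd cs) x) (evI cs x)"
proof (induction cs)
  case (Cons c cs)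
  have "cg (int p) z (of_int (dv (rd c))) (of_int c)" by (rule cg_int) (use okrd in simp)
  moreover have "cg (int p) z (x * evF (map rd cs) x) (x * evI cs x)" using Cons by (intro cg_mult_left) auto
  ultimately show ?case by (simp add: cg_add)
qed simp

lemma red2_cg: "x \<in> zr z \<Longrightarrow> y \<in> zr z \<Longrightarrow> cg (int p) z (ev2 (map (map rd) rs) x y) (evI2 rs x y)"
proof (induction rs)
  case (Cons r rs)
  have "cg (int p) z (evF (map rd r) x) (evI r x)" by (rule red_cg) fact
  moreover have "cg (int p) z (y * ev2 (map (map rd) rs) x y) (y * evI2 rs x y)" using Cons by (intro cg_mult_left) auto
  ultimately show ?case by (simp add: cg_add)
qed simp

lemma altd_cg: "x \<in> zr z \<Longrightarrow> cg (int p) z (evF (altd n cs) x) (evF cs (- x))"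
proof (induction cs rule: induct_list012)
  case (3 c d cs)
  have x: "x \<in> zr z" by fact
  have A: "cg (int p) z (of_int (dv (n d))) (of_int (- dv d))" by (rule cg_int) (use okn in simp)
  have B: "cg (int p) z (x * x * evF (altd n cs) x) (x * x * evF cs (- x))"
    by (rule cg_mult_left) (use 3 zr_mult[OF x x] in auto)
  have C: "cg (int p) z (x * of_int (dv (n d))) (x * of_int (- dv d))"
    by (rule cg_mult_left[OF A x])
  have D: "cg (int p) z (of_int (dv c) + (x * of_int (dv (n d)) + x * x * evF (altd n cs) x))
     (of_int (dv c) + (x * of_int (- dv d) + x * x * evF cs (- x)))"
    by (rule cg_add[OF cg_refl cg_add[OF C B]])
  thus ?case by (simp add: algebra_simps)
qed auto

end

lemma evF_trimd: "evF (trimd cs) x = evF cs x"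
  by (induction cs) (auto simp: Let_def split: if_splits)

lemma evF_D0s: "(\<forall>c\<in>set cs. c = D0) \<Longrightarrow> dv D0 = 0 \<Longrightarrow> evF cs x = 0"
  by (induction cs) auto

lemma ev2_trimd: "ev2 (map trimd rs) x y = ev2 rs x y"
  by (induction rs) (auto simp: evF_trimd)

lemma evF_replicate: "dv D0 = 0 \<Longrightarrow> evF (replicate m D0 @ cs) x = x ^ m * evF cs x"
  by (induction m) auto

lemma pow_pred: "k > 0 \<Longrightarrow> (x::complex) * x ^ (k - 1) = x ^ k"
  by (cases k) auto

lemma evF_spread: "k > 0 \<Longrightarrow> evF (spread k D0 cs) x = evF cs (x ^ k)"
proof (induction k "D0" cs rule: spread.induct)
  case (3 k c d cs)
  have "evF (spread k D0 (c # d # cs)) x = evF [c] x + x * (x ^ (k - 1) * evF (spread k D0 (d # cs)) x)"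
    by (simp add: evF_replicate)
  also have "\<dots> = evF [c] x + x ^ k * evF (spread k D0 (d # cs)) x"
    using pow_pred[OF 3(2), of x] by (simp only: mult.assoc[symmetric])
  finally show ?case using 3 by simp
qed auto

lemma evI_replicate: "evI (replicate m 0 @ cs) x = x ^ m * evI cs x"
  by (induction m) auto

lemma evI_spread: "k > 0 \<Longrightarrow> evI (spread k 0 cs) x = evI cs (x ^ k)"
proof (induction k "0::int" cs rule: spread.induct)
  case (3 k c d cs)
  have "evI (spread k (0::int) (c # d # cs)) x = evI [c] x + x * (x ^ (k - 1) * evI (spread k (0::int) (d # cs)) x)"
    by (simp add: evI_replicate)
  also have "\<dots> = evI [c] x + x ^ k * evI (spread k (0::int) (d # cs)) x"
    using pow_pred[OF 3(2), of x] by (simp only: mult.assoc[symmetric])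
  finally show ?case using 3 by simp
qed auto

lemma evI_alti: "evI (alti cs) x = evI cs (- x)"
  by (induction cs rule: alti.induct) (auto simp: algebra_simps)

lemma evI2_replicate: "evI2 (replicate m [] @ cs) x y = y ^ m * evI2 cs x y"
  by (induction m) auto

lemma evI2_spread: "k > 0 \<Longrightarrow> evI2 (spread k [] rs) x y = evI2 rs x (y ^ k)"
proof (induction k "[]::int list" rs rule: spread.induct)
  case (3 k c d cs)
  have "evI2 (spread k [] (c # d # cs)) x y = evI c x + y * (y ^ (k - 1) * evI2 (spread k [] (d # cs)) x y)"
    by (simp add: evI2_replicate)
  also have "\<dots> = evI c x + y ^ k * evI2 (spread k [] (d # cs)) x y"
    using pow_pred[OF 3(2), of y] by (simp only: mult.assoc[symmetric])
  finally show ?case using 3 by simp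
qed auto

lemma evI2_map: "(\<And>r. evI (h r) x = evI r x') \<Longrightarrow> evI2 (map h rs) x y = evI2 rs x' y"
  by (induction rs) auto




definition Pint :: "int list list" where "Pint = [[(-1), (-1), 0, 0, (-1), 1, 0, 1, 0, 0, 0, 0, 0, 0, 0, 0], [0, 0, 0, 0, 0, 0, (-2), 0, 0, 0, 0, 0, 0, 0, 0, 0], [1, 0, 0, 0, 1, 0, 1, (-2), 2, (-1), 0, (-1), 0, 0, 0, (-1)], [0, 0, 0, 0, 0, 0, 0, 0, 0, 2, 0, 0, 0, 0, 0, 0], [0, 0, 0, 0, 0, 0, 0, 0, (-1), 0, (-1), 1, 0, 0, 1, 1]]"

lemma R_eval: "poly (map_poly of_int (R t)) z = evI2 Pint z (z ^ (2 * t))"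
proof -
  define y where "y = z ^ (2 * t)"
  have e8: "z ^ (8 * t + e) = z ^ e * y ^ 4" for e
    unfolding y_def by (simp add: power_add power_mult[symmetric] mult.commute)
  have e6: "z ^ (6 * t + e) = z ^ e * y ^ 3" for e
    unfolding y_def by (simp add: power_add power_mult[symmetric] mult.commute)
  have e4: "z ^ (4 * t + e) = z ^ e * y ^ 2" for e
    unfolding y_def by (simp add: power_add power_mult[symmetric] mult.commute)
  have e2: "z ^ (2 * t + e) = z ^ e * y" for e
    unfolding y_def by (simp add: power_add power_mult[symmetric] mult.commute)
  have e4': "z ^ (4 * t) = y ^ 2"
    unfolding y_def by (simp add: power_mult[symmetric] mult.commute)
  have "poly (map_poly of_int (R t)) z =
     z ^ 15 * y ^ 4 + z ^ 14 * y ^ 4 + z ^ 11 * y ^ 4 - z ^ 10 * y ^ 4 - z ^ 8 * y ^ 4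
     + 2 * z ^ 9 * y ^ 3 - z ^ 15 * y ^ 2 - z ^ 11 * y ^ 2 - z ^ 9 * y ^ 2 + 2 * z ^ 8 * y ^ 2
     - 2 * z ^ 7 * y ^ 2 + z ^ 6 * y ^ 2 + z ^ 4 * y ^ 2 + y ^ 2 - 2 * z ^ 6 * y + z ^ 7 + z ^ 5
     - z ^ 4 - z - 1"
    by (simp add: R_def hom_distribs poly_monom e8 e6 e4 e2 e4')
  also have "\<dots> = evI2 Pint z y"
    by (simp add: Pint_def algebra_simps eval_nat_numeral)
  finally show ?thesis unfolding y_def .
qed




definition Qodd :: "int list list" where "Qodd = spread 2 [] (map (spread 2 0) Pint)"
definition Qtwo :: "int list list" where "Qtwo = spread 2 [] (map (\<lambda>r. spread 2 0 (alti r)) Pint)"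
definition Qfour :: "int list list" where "Qfour = map alti Pint"

lemma Qodd_eval: "evI2 Qodd x y = evI2 Pint (x ^ 2) (y ^ 2)"
  unfolding Qodd_def by (simp add: evI2_spread evI2_map[OF evI_spread])

lemma Qtwo_eval: "evI2 Qtwo x y = evI2 Pint (- (x ^ 2)) (y ^ 2)"
  unfolding Qtwo_def by (simp add: evI2_spread evI2_map[of _ x "- (x^2)"] evI_spread evI_alti)

lemma Qfour_eval: "evI2 Qfour x y = evI2 Pint (- x) y"
  unfolding Qfour_def by (simp add: evI2_map[of _ x "- x"] evI_alti)

lemma cg_zr: "cg p z u v \<Longrightarrow> u \<in> zr z \<Longrightarrow> v \<in> zr z"
proof -
  assume "cg p z u v" "u \<in> zr z"
  then obtain w where w: "w \<in> zr z" "u - v = of_int p * w" unfolding cg_def by blast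
  hence "v = u - of_int p * w" by (simp add: w(2)[symmetric])
  thus ?thesis using w \<open>u \<in> zr z\<close> by (auto intro!: zr_diff zr_mult zr_int)
qed

lemma evI_zr: "x \<in> zr z \<Longrightarrow> evI cs x \<in> zr z"
  by (induction cs) (auto intro!: zr_add zr_mult zr_int)

lemma ev2_Zs: "\<forall>r\<in>set Zs. r = [] \<Longrightarrow> ev2 Zs x y = 0"
  by (induction Zs) auto

lemma step1:
  assumes ok: "okops p f g n rd" and x: "x \<in> zr z" and y: "y \<in> zr z"
    and c1: "map trimd (bpadd f (bpmul f g (map (map rd) Pint) A) (bpmul f g (map (map rd) Q) B)) = G # Zs"
    and Zs: "\<forall>r\<in>set Zs. r = []"
    and cK: "trimd (pmul f g K S) = G"
    and h1: "evI2 Pint x y = 0" and h2: "evI2 Q x y = 0"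
  shows "cg (int p) z (evF K x * evF S x) 0"
proof -
  define F1 where "F1 = map (map rd) Pint"
  define F2 where "F2 = map (map rd) Q"
  have f1: "cg (int p) z (ev2 F1 x y) 0" using red2_cg[OF ok x y, of Pint] h1 by (simp add: F1_def)
  have f2: "cg (int p) z (ev2 F2 x y) 0" using red2_cg[OF ok x y, of Q] h2 by (simp add: F2_def)
  have m1: "cg (int p) z (ev2 (bpmul f g F1 A) x y) 0"
  proof -
    have "cg (int p) z (ev2 (bpmul f g F1 A) x y) (ev2 F1 x y * ev2 A x y)" by (rule bpmul_cg[OF ok x y])
    moreover have "cg (int p) z (ev2 F1 x y * ev2 A x y) (0 * ev2 A x y)"
      by (rule cg_mult[OF f1 cg_refl zr_0 ev2_zr[OF x y]])
    ultimately show ?thesis by (auto intro: cg_trans)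
  qed
  have m2: "cg (int p) z (ev2 (bpmul f g F2 B) x y) 0"
  proof -
    have "cg (int p) z (ev2 (bpmul f g F2 B) x y) (ev2 F2 x y * ev2 B x y)" by (rule bpmul_cg[OF ok x y])
    moreover have "cg (int p) z (ev2 F2 x y * ev2 B x y) (0 * ev2 B x y)"
      by (rule cg_mult[OF f2 cg_refl zr_0 ev2_zr[OF x y]])
    ultimately show ?thesis by (auto intro: cg_trans)
  qed
  have "cg (int p) z (ev2 (bpadd f (bpmul f g F1 A) (bpmul f g F2 B)) x y)
          (ev2 (bpmul f g F1 A) x y + ev2 (bpmul f g F2 B) x y)" by (rule bpadd_cg[OF ok x y])
  moreover have "cg (int p) z (ev2 (bpmul f g F1 A) x y + ev2 (bpmul f g F2 B) x y) (0 + 0)"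
    by (rule cg_add[OF m1 m2])
  ultimately have "cg (int p) z (ev2 (bpadd f (bpmul f g F1 A) (bpmul f g F2 B)) x y) 0"
    by (auto intro: cg_trans)
  moreover have "ev2 (bpadd f (bpmul f g F1 A) (bpmul f g F2 B)) x y = evF G x"
  proof -
    have "ev2 (bpadd f (bpmul f g F1 A) (bpmul f g F2 B)) x y
        = ev2 (map trimd (bpadd f (bpmul f g F1 A) (bpmul f g F2 B))) x y" by (simp add: ev2_trimd)
    also have "\<dots> = ev2 (G # Zs) x y" using c1 by (simp add: F1_def F2_def)
    also have "\<dots> = evF G x" using ev2_Zs[OF Zs] by simp
    finally show ?thesis .
  qed
  ultimately have g0: "cg (int p) z (evF G x) 0" by simp
  have "evF G x = evF (pmul f g K S) x" using cK evF_trimd by metis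
  hence "cg (int p) z (evF G x) (evF K x * evF S x)" using pmul_cg[OF ok x] by simp
  thus ?thesis using g0 by (auto intro: cg_trans cg_sym)
qed

lemma step2:
  assumes ok: "okops p f g n rd" and x: "x \<in> zr z"
    and c2: "trimd (padd f (pmul f g X U) (pmul f g X2 V)) = [D1]"
  shows "cg (int p) z (evF X x * evF U x + evF X2 x * evF V x) 1"
proof -
  have "evF (padd f (pmul f g X U) (pmul f g X2 V)) x = 1"
    using arg_cong[OF c2, of "\<lambda>L. evF L x"] by (simp add: evF_trimd)
  moreover have "cg (int p) z (evF (padd f (pmul f g X U) (pmul f g X2 V)) x)
     (evF (pmul f g X U) x + evF (pmul f g X2 V) x)" by (rule padd_cg[OF ok x])
  moreover have "cg (int p) z (evF (pmul f g X U) x + evF (pmul f g X2 V) x)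
     (evF X x * evF U x + evF X2 x * evF V x)" by (rule cg_add[OF pmul_cg[OF ok x] pmul_cg[OF ok x]])
  ultimately show ?thesis by (auto intro: cg_trans cg_sym)
qed

lemma combine:
  assumes h1: "cg p z (A1 * S1) 0" and h2: "cg p z (A2 * S2) 0" and h3: "cg p z (S1 * U + S2 * V) 1"
    and zr: "A1 \<in> zr z" "A2 \<in> zr z" "S1 \<in> zr z" "S2 \<in> zr z" "U \<in> zr z" "V \<in> zr z"
  shows "cg p z (A1 * A2) 0"
proof -
  have a12: "A1 * A2 \<in> zr z" using zr by (intro zr_mult)
  have "cg p z (A1 * A2 * (S1 * U + S2 * V)) (A1 * A2 * 1)" by (rule cg_mult_left[OF h3 a12])
  hence e1: "cg p z (A1 * A2) (A1 * A2 * (S1 * U + S2 * V))" by (simp add: cg_sym)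
  have "A1 * A2 * (S1 * U + S2 * V) = (A2 * U) * (A1 * S1) + (A1 * V) * (A2 * S2)" by (simp add: algebra_simps)
  moreover have "cg p z ((A2 * U) * (A1 * S1) + (A1 * V) * (A2 * S2)) (0 + 0)"
    using zr by (intro cg_add cg_zero_mult h1 h2 zr_mult)
  ultimately have "cg p z (A1 * A2 * (S1 * U + S2 * V)) 0" by simp
  from cg_trans[OF e1 this] show ?thesis .
qed

lemma finish:
  assumes ok: "okops p f g n rd" and zb: "z ^ b = 1" and b: "b > 0"
    and w: "w1 \<in> zr z" "w2 \<in> zr z"
    and K0: "cg (int p) z (evF K w1 * evF K w2) 0"
    and Ki: "map rd Ki = K" and Kev: "\<And>x. evI Ki x = Kf x"
    and iv1: "iv p z (Kf w1)" and iv2: "iv p z (Kf w2)"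
  shows False
proof -
  have c1: "cg (int p) z (evF K w1) (Kf w1)" using red_cg[OF ok w(1), of Ki] Ki Kev by simp
  have c2: "cg (int p) z (evF K w2) (Kf w2)" using red_cg[OF ok w(2), of Ki] Ki Kev by simp
  have "Kf w1 \<in> zr z" using evI_zr[OF w(1), of Ki] Kev by simp
  hence "cg (int p) z (evF K w1 * evF K w2) (Kf w1 * Kf w2)"
    by (rule cg_mult[OF c1 c2 _ evF_zr[OF w(2)]])
  hence "cg (int p) z (Kf w1 * Kf w2) 0" using K0 by (auto intro: cg_trans cg_sym)
  moreover have "iv p z (Kf w1 * Kf w2)" using okp[OF ok] iv1 iv2 by (rule iv_mult)
  ultimately show False using final_contra[OF zb b okp[OF ok]] by blast
qed

lemma even_pow_neg: "(- a :: complex) ^ (2 * t) = a ^ (2 * t)"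
  by (simp add: power_mult)

lemma sq_pow: "(a ^ 2 :: complex) ^ (2 * t) = (a ^ (2 * t)) ^ 2"
  by (simp add: power_mult[symmetric] mult.commute)

lemma zr_pow_z: "z ^ k \<in> zr z"
  by (rule zr_power[OF zr_z])

lemma case_odd:
  assumes ok: "okops p f g n rd"
    and c1: "map trimd (bpadd f (bpmul f g (map (map rd) Pint) A) (bpmul f g (map (map rd) Qodd) B)) = G # Zs"
    and Zs: "\<forall>r\<in>set Zs. r = []"
    and cK: "trimd (pmul f g K S) = G"
    and c2: "trimd (padd f (pmul f g S U) (pmul f g (spread 2 D0 S) V)) = [D1]"
    and Ki: "map rd Ki = K" and Kev: "\<And>x. evI Ki x = Kf x"
    and R0: "\<And>w. primitive_root_of_unity b w \<Longrightarrow> evI2 Pint w (w ^ (2 * t)) = 0"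
    and z: "primitive_root_of_unity b z" and z2: "primitive_root_of_unity b (z ^ 2)"
    and z4: "primitive_root_of_unity b (z ^ 4)"
    and iv1: "iv p z (Kf z)" and iv2: "iv p z (Kf (z ^ 2))"
  shows False
proof -
  have b: "b > 0" and zb: "z ^ b = 1" using z unfolding primitive_root_of_unity_def by auto
  have zz: "z \<in> zr z" by (rule zr_z)
  have z2r: "z ^ 2 \<in> zr z" by (rule zr_pow_z)
  have s1: "cg (int p) z (evF K z * evF S z) 0"
  proof (rule step1[OF ok zz zr_pow_z c1 Zs cK])
    show "evI2 Pint z (z ^ (2 * t)) = 0" by (rule R0[OF z])
    have "evI2 Qodd z (z ^ (2 * t)) = evI2 Pint (z ^ 2) ((z ^ 2) ^ (2 * t))" by (simp add: Qodd_eval sq_pow)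
    also have "\<dots> = 0" by (rule R0[OF z2])
    finally show "evI2 Qodd z (z ^ (2 * t)) = 0" .
  qed
  have s2: "cg (int p) z (evF K (z ^ 2) * evF S (z ^ 2)) 0"
  proof (rule step1[OF ok z2r zr_pow_z c1 Zs cK])
    show "evI2 Pint (z ^ 2) (z ^ (2 * (2 * t))) = 0" using R0[OF z2] by (simp add: power_mult[symmetric] mult.commute)
    have "evI2 Qodd (z ^ 2) (z ^ (2 * (2 * t))) = evI2 Pint (z ^ 4) ((z ^ 4) ^ (2 * t))"
      by (simp add: Qodd_eval power_mult[symmetric] mult.commute mult.left_commute)
    also have "\<dots> = 0" by (rule R0[OF z4])
    finally show "evI2 Qodd (z ^ 2) (z ^ (2 * (2 * t))) = 0" .
  qed
  have s3: "cg (int p) z (evF S z * evF U z + evF S (z ^ 2) * evF V z) 1"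
    using step2[OF ok zz c2] by (simp add: evF_spread)
  have "cg (int p) z (evF K z * evF K (z ^ 2)) 0"
    by (rule combine[OF s1 s2 s3]) (auto intro: evF_zr zz z2r)
  thus False by (rule finish[OF ok zb b zz z2r _ Ki Kev iv1 iv2])
qed

lemma case_two:
  assumes ok: "okops p f g n rd"
    and c1: "map trimd (bpadd f (bpmul f g (map (map rd) Pint) A) (bpmul f g (map (map rd) Qtwo) B)) = G # Zs"
    and Zs: "\<forall>r\<in>set Zs. r = []"
    and cK: "trimd (pmul f g K S) = G"
    and c2: "trimd (padd f (pmul f g S U) (pmul f g (spread 2 D0 (altd n S)) V)) = [D1]"
    and Ki: "map rd Ki = K" and Kev: "\<And>x. evI Ki x = Kf x"
    and R0: "\<And>w. primitive_root_of_unity b w \<Longrightarrow> evI2 Pint w (w ^ (2 * t)) = 0"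
    and z: "primitive_root_of_unity b z" and z2: "primitive_root_of_unity b (- (z ^ 2))"
    and z4: "primitive_root_of_unity b (- (z ^ 4))"
    and iv1: "iv p z (Kf z)" and iv2: "iv p z (Kf (- (z ^ 2)))"
  shows False
proof -
  have b: "b > 0" and zb: "z ^ b = 1" using z unfolding primitive_root_of_unity_def by auto
  have zz: "z \<in> zr z" by (rule zr_z)
  have z2r: "- (z ^ 2) \<in> zr z" by (rule zr_uminus[OF zr_pow_z])
  have s1: "cg (int p) z (evF K z * evF S z) 0"
  proof (rule step1[OF ok zz zr_pow_z c1 Zs cK])
    show "evI2 Pint z (z ^ (2 * t)) = 0" by (rule R0[OF z])
    have "evI2 Qtwo z (z ^ (2 * t)) = evI2 Pint (- (z ^ 2)) ((- (z ^ 2)) ^ (2 * t))"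
      by (simp add: Qtwo_eval sq_pow even_pow_neg)
    also have "\<dots> = 0" by (rule R0[OF z2])
    finally show "evI2 Qtwo z (z ^ (2 * t)) = 0" .
  qed
  have s2: "cg (int p) z (evF K (- (z ^ 2)) * evF S (- (z ^ 2))) 0"
  proof (rule step1[OF ok z2r zr_pow_z c1 Zs cK])
    show "evI2 Pint (- (z ^ 2)) (z ^ (2 * (2 * t))) = 0"
      using R0[OF z2] by (simp add: even_pow_neg power_mult[symmetric] mult.commute)
    have "evI2 Qtwo (- (z ^ 2)) (z ^ (2 * (2 * t))) = evI2 Pint (- (z ^ 4)) ((- (z ^ 4)) ^ (2 * t))"
      by (simp add: Qtwo_eval even_pow_neg power_mult[symmetric] mult.commute mult.left_commute)
    also have "\<dots> = 0" by (rule R0[OF z4])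
    finally show "evI2 Qtwo (- (z ^ 2)) (z ^ (2 * (2 * t))) = 0" .
  qed
  have "cg (int p) z (evF S z * evF U z + evF (spread 2 D0 (altd n S)) z * evF V z) 1"
    by (rule step2[OF ok zz c2])
  moreover have "cg (int p) z (evF (spread 2 D0 (altd n S)) z) (evF S (- (z ^ 2)))"
    using altd_cg[OF ok zr_pow_z[of z 2], of S] by (simp add: evF_spread)
  ultimately have s3: "cg (int p) z (evF S z * evF U z + evF S (- (z ^ 2)) * evF V z) 1"
    by (meson cg_add cg_mult cg_refl cg_sym cg_trans evF_zr zz)
  have "cg (int p) z (evF K z * evF K (- (z ^ 2))) 0"
    by (rule combine[OF s1 s2 s3]) (auto intro: evF_zr zz z2r)
  thus False by (rule finish[OF ok zb b zz z2r _ Ki Kev iv1 iv2])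
qed

lemma case_four:
  assumes ok: "okops p f g n rd"
    and c1: "map trimd (bpadd f (bpmul f g (map (map rd) Pint) A) (bpmul f g (map (map rd) Qfour) B)) = G # Zs"
    and Zs: "\<forall>r\<in>set Zs. r = []"
    and cK: "trimd (pmul f g K (spread 2 D0 T)) = G"
    and c2: "trimd (padd f (pmul f g T U) (pmul f g X2 V)) = [D1]"
    and hX2: "cg (int p) z (evF X2 (z ^ 2)) (evF T (z' ^ 2))"
    and Ki: "map rd Ki = K" and Kev: "\<And>x. evI Ki x = Kf x"
    and R0: "\<And>w. primitive_root_of_unity b w \<Longrightarrow> evI2 Pint w (w ^ (2 * t)) = 0"
    and z: "primitive_root_of_unity b z" and zm: "primitive_root_of_unity b (- z)"
    and z': "primitive_root_of_unity b z'" and zm': "primitive_root_of_unity b (- z')"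
    and z'r: "z' \<in> zr z"
    and iv1: "iv p z (Kf z)" and iv2: "iv p z (Kf z')"
  shows False
proof -
  have b: "b > 0" and zb: "z ^ b = 1" using z unfolding primitive_root_of_unity_def by auto
  have zz: "z \<in> zr z" by (rule zr_z)
  have gen: "cg (int p) z (evF K w * evF T (w ^ 2)) 0"
    if w: "primitive_root_of_unity b w" "primitive_root_of_unity b (- w)" "w \<in> zr z" for w
  proof -
    have "cg (int p) z (evF K w * evF (spread 2 D0 T) w) 0"
    proof (rule step1[OF ok w(3) zr_power[OF w(3)] c1 Zs cK])
      show "evI2 Pint w (w ^ (2 * t)) = 0" by (rule R0[OF w(1)])
      have "evI2 Qfour w (w ^ (2 * t)) = evI2 Pint (- w) ((- w) ^ (2 * t))"
        by (simp add: Qfour_eval even_pow_neg)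
      also have "\<dots> = 0" by (rule R0[OF w(2)])
      finally show "evI2 Qfour w (w ^ (2 * t)) = 0" .
    qed
    thus ?thesis by (simp add: evF_spread)
  qed
  have s1: "cg (int p) z (evF K z * evF T (z ^ 2)) 0" by (rule gen[OF z zm zz])
  have s2: "cg (int p) z (evF K z' * evF T (z' ^ 2)) 0" by (rule gen[OF z' zm' z'r])
  have "cg (int p) z (evF T (z ^ 2) * evF U (z ^ 2) + evF X2 (z ^ 2) * evF V (z ^ 2)) 1"
    by (rule step2[OF ok zr_pow_z c2])
  hence s3: "cg (int p) z (evF T (z ^ 2) * evF U (z ^ 2) + evF T (z' ^ 2) * evF V (z ^ 2)) 1"
    using hX2 by (meson cg_add cg_mult cg_refl cg_sym cg_trans evF_zr zr_pow_z zr_power z'r)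
  have "cg (int p) z (evF K z * evF K z') 0"
    by (rule combine[OF s1 s2 s3]) (auto intro: evF_zr zz z'r zr_pow_z zr_power)
  thus False by (rule finish[OF ok zb b zz z'r _ Ki Kev iv1 iv2])
qed



definition A_3o :: "dig list list" where
  "A_3o = [[D2,D1,D0,D0,D2,D2,D1,D2,D1,D0,D2,D0,D1,D1,D2,D2,D0,D0,D1,D0,D1,D0,D2,D2,D0,D1,D0,D2,D0,D0,D2,D0,D1,D1,D1,D0,D0,D1,D2,D0,D1,D1,D1,D0,D2,D2,D2,D0,D2,D2,D2,D0,D2,D2,D0,D1,D2,D1,D2,D2,D0,D1,D0,D2,D1,D2,D0,D0,D2,D0,D2,D2,D1,D2,D1,D2,D0,D2,D0,D2,D0,D2,D2,D2,D0,D1,D1,D2,D1,D2,D1,D2,D2,D1,D1,D2,D0,D2,D1,D0,D2,D1,D0,D0,D0,D1,D2,D0,D1,D2,D2,D1,D0,D0,D2,D0,D2,D0,D2,D0,D0,D0,D1,D2,D2,D0,D2,D1,D1,D0,D2,D1,D0,D2,D0,D1,D0,D0,D1,D1,D0,D2,D1,D0,D2,D0,D2,D1,D2,D2,D0,D1,D2,D2,D2,D0,D1,D2],[D0,D0,D0,D0,D0,D2,D1,D2,D0,D1,D0,D1,D2,D0,D0,D2,D0,D1,D2,D0,D1,D2,D2,D1,D2,D1,D0,D1,D1,D1,D0,D0,D2,D0,D0,D1,D1,D0,D2,D0,D0,D2,D1,D0,D0,D0,D0,D0,D1,D2,D0,D1,D0,D1,D0,D2,D2,D0,D2,D0,D2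,D2,D2,D2,D1,D1,D0,D1,D2,D0,D0,D0,D1,D0,D1,D2,D1,D2,D1,D0,D2,D1,D1,D0,D2,D1,D1,D2,D2,D1,D1,D1,D1,D0,D0,D2,D2,D2,D1,D1,D2,D0,D0,D2,D1,D2,D0,D0,D0,D0,D0,D0,D2,D0,D1,D1,D2,D0,D0,D2,D2,D1,D1,D2,D1,D0,D2,D1,D2,D2,D0,D1,D0,D1,D0,D2,D2,D0,D0,D0,D2,D0,D2,D2,D2,D1,D2,D2,D0,D1,D0,D1,D2,D2,D2,D0,D1,D0,D1],[D2,D2,D1,D2,D0,D0,D1,D2,D2,D2,D1,D0,D2,D2,D0,D1,D1,D0,D2,D1,D1,D2,D0,D1,D1,D1,D1,D0,D1,D2,D1,D0,D0,D2,D0,D1,D1,D2,D1,D0,D1,D2,D1,D0,D2,D2,D2,D2,D2,D1,D1,D1,D2,D1,D0,D0,D1,D0,D0,D0,D2,D2,D2,D0,D1,D2,D1,D1,D1,D0,D1,D1,D0,D0,D0,D1,D1,D0,D1,D2,D1,D0,D0,D2,D1,D1,D2,D0,D0,D2,D0,D1,D0,D2,D1,D2,D1,D0,D0,D0,D1,D2,D2,D1,D0,D0,D1,D1,D2,D0,D2,D1,D2,D2,D1,D2,D1,D2,D1,D1,D2,D0,D1,D2,D0,D0,D1,D0,D1,D0,D2,D1,D2,D1,D1,D2,D1,D1,D2,D1,D0,D1,D0,D0,D2,D1,D2,D1,D1,D0,D1,D1,D1,D0,D0,D2,D0,D2,D2,D1,D1,D1,D0,D1,D1,D2],[D0,D0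,D0,D0,D0,D2,D1,D0,D1,D0,D1,D2,D2,D0,D0,D1,D2,D0,D0,D0,D0,D2,D0,D1,D0,D0,D0,D0,D0,D0,D2,D0,D1,D2,D0,D2,D1,D2,D1,D0,D1,D0,D0,D0,D0,D2,D1,D0,D2,D2,D2,D1,D1,D0,D0,D1,D2,D0,D2,D1,D0,D0,D1,D1,D2,D0,D1,D1,D1,D1,D0,D1,D2,D0,D0,D2,D0,D2,D0,D0,D2,D2,D0,D2,D1,D0,D2,D1,D2,D1,D2,D1,D2,D1,D0,D1,D1,D2,D1,D1,D0,D0,D0,D2,D2,D2,D1,D1,D0,D0,D0,D0,D2,D0,D2,D1,D0,D1,D2,D1,D2,D0,D1,D2,D0,D0,D0,D2,D0,D1,D2,D0,D1,D1,D2,D1,D0,D1,D1,D2,D1,D2,D0,D0,D0,D0,D2,D2,D0,D0,D0,D2,D2,D2,D0,D1,D1,D2,D2,D2,D0,D0,D1,D0,D1,D0,D1],[D0,D0,D0,D0,D0,D0,D0,D0,D0,D0,D0,D0,D0,D0,D0,D0,D1,D2,D1,D1,D1,D1,D1,D1,D2,D0,D1,D0,D1,D1,D0,D1,D2,D2,D1,D1,D0,D1,D0,D0,D1,D0,D2,D0,D1,D2,D1,D0,D0,D0,D2,D0,D0,D1,D1,D1,D2,D2,D2,D1,D2,D0,D2,D0,D0,D2,D2,D2,D1,D2,D0,D2,D0,D2,D0,D2,D2,D2,D1,D2,D0,D1,D1,D2,D1,D0,D1,D1,D1,D1,D1,D2,D0,D2,D2,D1,D0,D2,D0,D0,D1,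D1,D0,D1,D0,D0,D2,D0,D2,D1,D2,D2,D0,D1,D0,D1,D2,D0,D1,D0,D0,D1,D0,D2,D0,D1,D1,D1,D2,D0,D1,D1,D1,D0,D1,D2,D0,D1,D1,D1,D1,D1,D1,D0,D0,D0,D0,D1,D1,D1,D1,D1,D0,D0,D0,D1,D2,D1],[D0,D0,D0,D0,D0,D0,D0,D0,D0,D0,D0,D0,D0,D0,D0,D0,D0,D0,D0,D0,D0,D1,D2,D2,D2,D0,D1,D2,D1,D1,D0,D2,D0,D2,D1,D0,D2,D2,D2,D2,D1,D1,D0,D1,D0,D2,D2,D1,D2,D2,D2,D0,D1,D2,D2,D0,D1,D1,D0,D0,D2,D2,D2,D0,D2,D2,D1,D1,D1,D2,D0,D2,D1,D2,D0,D0,D1,D0,D0,D0,D1,D0,D1,D1,D1,D1,D0,D0,D2,D2,D0,D2,D2,D0,D1,D1,D1,D1,D0,D1,D0,D2,D0,D0,D2,D0,D2,D0,D2,D1,D1,D0,D0,D0,D2,D0,D2,D1,D1,D2,D2,D1,D1,D1,D2,D2,D0,D0,D0,D1,D0,D0,D1,D1,D0,D0,D2,D2,D0,D2,D0,D2,D2,D1,D2,D2,D0,D2,D1,D1,D2,D0,D0,D1,D1,D0,D1,D0,D2],[D0,D0,D0,D0,D0,D0,D0,D0,D0,D0,D0,D0,D0,D0,D0,D0,D1,D1,D2,D1,D1,D1,D0,D1,D1,D2,D2,D0,D0,D1,D1,D1,D1,D2,D2,D1,D2,D2,D1,D1,D0,D1,D0,D2,D2,D1,D0,D0,D2,D1,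D1,D2,D0,D0,D2,D0,D1,D0,D2,D2,D0,D1,D2,D0,D1,D1,D0,D2,D1,D1,D0,D0,D0,D0,D1,D1,D1,D0,D1,D0,D0,D0,D1,D0,D1,D0,D2,D1,D2,D0,D1,D1,D2,D0,D2,D2,D1,D1,D2,D1,D2,D2,D2,D2,D2,D0,D1,D1,D0,D1,D2,D1,D1,D2,D0,D2,D1,D0,D2,D0,D0,D0,D1,D1,D1,D0,D0,D1,D0,D0,D2,D2,D2,D1,D0,D0,D2,D1,D0,D1,D1,D2,D0,D2,D1,D2,D0,D2,D1,D0,D0,D2,D0,D2,D2,D0,D1,D0,D0,D1,D2,D1,D2,D0,D2,D1],[D0,D0,D0,D0,D0,D0,D0,D0,D0,D0,D0,D0,D0,D0,D0,D0,D0,D0,D0,D0,D0,D1,D2,D0,D2,D1,D1,D0,D1,D2,D1,D0,D1,D2,D0,D0,D1,D1,D2,D0,D2,D0,D1,D2,D2,D0,D2,D2,D1,D0,D0,D1,D2,D1,D2,D0,D1,D2,D0,D0,D1,D2,D0,D1,D2,D2,D0,D1,D2,D2,D0,D2,D1,D2,D2,D1,D0,D0,D2,D0,D0,D2,D0,D2,D1,D1,D0,D1,D2,D0,D0,D0,D1,D2,D2,D0,D2,D2,D1,D1,D0,D2,D2,D2,D2,D0,D0,D0,D2,D2,D0,D2,D1,D2,D2,D2,D0,D2,D1,D1,D2,D0,D1,D0,D0,D2,D1,D2,D2,D0,D1,D0,D2,D2,D2,D0,D1,D0,D1,D2,D0,D0,D2,D2,D2,D2,D1,D1,D0,D2,D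1,D2,D1,D0,D2,D0,D2,D2,D1,D1,D2,D0,D1,D0,D1,D0,D2]]"

definition B_3o :: "dig list list" where
  "B_3o = [[D1,D1,D2,D1,D1,D1,D2,D1,D1,D2,D2,D2,D0,D0,D1,D0,D1,D2,D2,D1,D2,D0,D2,D1,D1,D0,D1,D2,D2,D0,D0,D2,D1,D2,D1,D0,D2,D2,D0,D1,D2,D2,D0,D1,D2,D1,D0,D2,D0,D2,D1,D1,D2,D1,D1,D0,D0,D2,D0,D2,D1,D1,D1,D0,D0,D2,D1,D1,D0,D2,D2,D1,D1,D0,D0,D2,D2,D1,D1,D1,D0,D0,D2,D0,D2,D1,D1,D1,D0,D0,D0,D1,D2,D2,D1,D0,D1,D0,D1,D1,D1,D2,D1,D1,D0,D1,D1,D2,D0,D1,D2,D1,D1,D0,D1,D0,D2,D2,D1,D0,D2,D1,D1,D2,D0,D1,D1,D0,D0,D2,D0,D0,D2,D2,D2,D2,D1,D1,D1,D1,D1,D2,D2,D1,D2,D1,D0,D0,D2,D2,D1],[D0,D0,D0,D0,D0,D1,D2,D0,D2,D0,D0,D0,D2,D2,D0,D2,D0,D2,D1,D1,D2,D1,D2,D1,D2,D0,D2,D1,D1,D1,D0,D0,D0,D2,D1,D1,D1,D1,D1,D0,D2,D1,D0,D1,D2,D2,D0,D0,D2,D1,D1,D1,D1,D2,D0,D1,D2,D2,D0,D1,D2,D0,D2,D0,D0,D2,D2,D0,D2,D1,D1,D0,D0,D0,D2,D1,D1,D1,D0,D0,D0,D2,D1,D1,D2,D0,D0,D0,D2,D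0,D2,D2,D0,D2,D2,D2,D1,D2,D1,D0,D2,D0,D1,D2,D1,D0,D0,D2,D2,D2,D1,D0,D2,D0,D1,D1,D1,D2,D0,D0,D2,D2,D2,D2,D1,D0,D2,D0,D0,D2,D1,D1,D0,D0,D1,D1,D1,D0,D1,D1,D1,D1,D1,D1,D1,D1,D0,D1,D0,D2,D0,D2],[D0,D0,D0,D0,D0,D0,D0,D0,D2,D2,D0,D2,D2,D1,D2,D2,D1,D2,D2,D2,D1,D0,D0,D1,D0,D1,D1,D1,D0,D1,D1,D1,D0,D2,D1,D1,D1,D1,D1,D0,D2,D2,D2,D2,D0,D1,D2,D1,D0,D1,D0,D0,D2,D2,D0,D2,D2,D1,D0,D1,D2,D0,D2,D0,D0,D1,D2,D0,D2,D2,D2,D2,D2,D2,D0,D1,D2,D2,D0,D2,D1,D1,D2,D0,D2,D1,D2,D1,D0,D1,D2,D1,D1,D0,D2,D2,D1,D0,D2,D2,D0,D2,D2,D0,D2,D1,D0,D0,D2,D2,D1,D0,D2,D1,D2,D0,D0,D2,D0,D1,D0,D2,D1,D1,D2,D1,D2,D1,D2,D1,D2,D2,D2,D0,D0,D0,D0,D2,D1,D1,D0,D0,D2,D2,D2,D0,D0,D1,D2,D0,D2],[D0,D0,D0,D0,D0,D0,D0,D0,D0,D0,D0,D0,D0,D2,D1,D2,D0,D2,D2,D2,D0,D1,D1,D2,D1,D0,D0,D2,D2,D0,D1,D2,D2,D1,D0,D0,D1,D1,D0,D2,D2,D1,D0,D0,D1,D0,D1,D1,D1,D2,D0,D1,D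0,D2,D0,D0,D0,D2,D2,D2,D1,D2,D1,D2,D1,D0,D2,D1,D2,D1,D0,D0,D2,D1,D2,D1,D0,D0,D1,D2,D1,D1,D0,D0,D2,D1,D2,D1,D1,D0,D2,D1,D2,D1,D1,D0,D0,D0,D0,D1,D0,D0,D2,D0,D2,D2,D2,D2,D0,D1,D1,D1,D2,D0,D1,D1,D2,D1,D1,D1,D1,D0,D1,D0,D0,D1,D0,D0,D1,D1,D0,D0,D1,D1,D1,D0,D0,D1,D1,D1,D2,D2,D1,D1,D0,D1,D0,D2,D1,D1,D1,D1]]"

definition G_3o :: "dig list" where
  "G_3o = [D0,D2,D2,D1,D2,D1,D1,D0,D1,D1,D1,D1,D1,D1,D2,D0,D1,D0,D1,D1,D2,D0,D1,D1,D2,D0,D0,D1,D1,D0,D0,D1,D1,D2,D1,D0,D0,D2,D1,D1,D1,D0,D0,D0,D1,D2,D0,D0,D2,D1,D2,D2,D2,D0,D2,D0,D2,D1,D0,D1,D0,D2,D1,D2,D1,D1,D2,D2,D2,D1,D0,D0,D1,D1,D0,D2,D2,D1,D2,D2,D0,D1,D2,D0,D1,D1,D2,D1,D1,D0,D2,D2,D0,D0,D2,D1,D1,D1,D2,D2,D1,D2,D1,D0,D2,D0,D2,D1,D0,D1,D0,D1,D1,D1,D2,D1,D0,D0,D1,D2,D0,D0,D0,D2,D2,D2,D1,D0,D0,D2,D1,D2,D2,D0,D0,D2,D2,D0,D0,D1,D2,D2,D0,D1,D2,D2,D0,D2,D0,D1,D2,D2,D2,D2,D2,D2,D0,D2,D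2,D1,D2,D1,D1]"

definition K_3o :: "dig list" where
  "K_3o = [D0,D2,D2,D1,D0,D2,D1,D0,D2,D1,D1]"

definition Ki_3o :: "int list" where
  "Ki_3o = [0, (-1), 5, (-8), 0, 14, (-14), 0, 8, (-5), 1]"

lemma c1_3o: "map trimd (bpadd a3 (bpmul a3 m3 (map (map red3) Pint) A_3o) (bpmul a3 m3 (map (map red3) Qodd) B_3o)) = G_3o # [[],[],[],[],[],[],[],[],[],[],[]]"
  by (simp add: A_3o_def B_3o_def G_3o_def Pint_def Qodd_def red3_def)

definition S_3o :: "dig list" where
  "S_3o = [D1,D0,D0,D1,D0,D1,D2,D2,D1,D0,D1,D2,D2,D1,D1,D1,D0,D1,D0,D0,D1,D2,D0,D2,D0,D2,D0,D1,D0,D2,D2,D0,D1,D1,D1,D0,D0,D2,D1,D2,D2,D2,D0,D1,D1,D1,D0,D2,D2,D2,D0,D1,D0,D1,D0,D1,D1,D0,D2,D1,D2,D0,D1,D2,D2,D2,D1,D2,D1,D2,D2,D2,D2,D2,D2,D0,D2,D0,D2,D2,D2,D2,D2,D2,D1,D2,D1,D2,D2,D2,D1,D0,D2,D1,D2,D0,D1,D1,D0,D1,D0,D1,D0,D2,D2,D2,D0,D1,D1,D1,D0,D2,D2,D2,D1,D2,D0,D0,D1,D1,D1,D0,D2,D2,D0,D1,D0,D2,D0,D2,D0,D2,D1,D0,D0,D1,D0,D1,D1,D1,D2,D2,D1,D0,D1,D2,D2,D1,D0,D1,D0,D0,D1]"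

lemma cK_3o: "trimd (pmul a3 m3 K_3o S_3o) = G_3o"
  by (simp add: K_3o_def S_3o_def G_3o_def)

lemma Ki_3o: "map red3 Ki_3o = K_3o"
  by (simp add: K_3o_def Ki_3o_def red3_def)

lemma Kev_3o: "evI Ki_3o x = x * (x - 1) ^ 7 * (x + 1) ^ 2"
  by (simp add: Ki_3o_def algebra_simps eval_nat_numeral power2_eq_square)

definition U_3o :: "dig list" where
  "U_3o = [D2,D1,D1,D1,D0,D2,D2,D1,D2,D2,D0,D1,D0,D0,D1,D1,D1,D2,D2,D2,D0,D0,D2,D0,D2,D0,D1,D1,D1,D1,D0,D1,D2,D1,D1,D0,D1,D0,D2,D1,D2,D0,D1,D1,D0,D0,D1,D1,D1,D1,D0,D0,D0,D1,D2,D1,D2,D2,D0,D2,D0,D2,D2,D1,D1,D1,D2,D1,D2,D0,D2,D1,D1,D0,D0,D0,D1,D2,D2,D2,D1,D0,D2,D2,D1,D2,D2,D0,D0,D1,D1,D2,D0,D2,D2,D1,D0,D2,D0,D0,D2,D1,D1,D2,D2,D2,D1,D2,D2,D1,D0,D2,D1,D2,D2,D0,D1,D1,D2,D1,D0,D1,D2,D1,D1,D0,D1,D0,D0,D0,D2,D1,D0,D2,D0,D2,D1,D0,D0,D1,D1,D1,D0,D2,D0,D0,D0,D2,D1,D2,D0,D1,D1,D0,D2,D2,D0,D1,D1,D2,D2,D0,D0,D0,D2,D1,D2,D1,D1,D0,D0,D0,D1,D0,D0,D0,D1,D2,D2,D0,D1,D1,D1,D0,D0,D1,D1,D1,D2,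D1,D1,D1,D1,D1,D2,D1,D1,D0,D1,D1,D0,D0,D1,D0,D1,D0,D0,D2,D2,D0,D0,D1,D2,D0,D0,D0,D0,D1,D0,D2,D0,D1,D2,D0,D0,D1,D2,D2,D2,D0,D0,D2,D2,D0,D1,D0,D2,D2,D0,D0,D1,D0,D2,D0,D1,D2,D1,D1,D1,D2,D2,D2,D2,D1,D2,D2,D1,D2,D0,D0,D0,D1,D0,D0,D2,D1,D2,D2,D1,D0,D2,D1,D0,D0,D1,D2,D2,D2,D2,D1,D2,D0,D0,D1,D1,D2,D2,D0,D1,D2,D2,D2,D0,D0,D1,D0,D1,D1,D1,D1,D0,D2,D1]"

definition V_3o :: "dig list" where
  "V_3o = [D2,D2,D2,D0,D2,D1,D2,D2,D2,D0,D0,D0,D1,D1,D2,D1,D1,D1,D0,D2,D1,D0,D2,D1,D1,D0,D0,D2,D1,D2,D1,D1,D2,D1,D0,D0,D0,D1,D1,D1,D0,D2,D1,D1,D0,D0,D1,D1,D2,D1,D1,D1,D2,D0,D0,D2,D0,D2,D2,D0,D1,D2,D2,D2,D2,D0,D2,D2,D0,D0,D0,D0,D0,D2,D0,D2,D0,D1,D1,D1,D2,D0,D2,D1,D1,D1,D0,D0,D2,D0,D0,D2,D1,D1,D0,D0,D0,D1,D0,D0,D1,D0,D1,D0,D0,D1,D0,D2,D1,D1,D0,D2,D1,D2,D2,D2,D2,D0,D1,D1,D1,D2,D0,D2,D0,D1,D0,D2,D0,D1,D0,D2,D2,D2,D2,D2,D1,D2,D0,D0,D1,D2,D1,D1,D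1,D1,D0,D1,D0,D1,D2]"

lemma c2_3o: "trimd (padd a3 (pmul a3 m3 S_3o U_3o) (pmul a3 m3 (spread 2 D0 S_3o) V_3o)) = [D1]"
  by (simp add: S_3o_def U_3o_def V_3o_def)

definition A_5o :: "dig list list" where
  "A_5o = [[D1,D1,D3,D2,D4,D1,D2,D2,D1,D2,D0,D1,D4,D1,D2,D1,D0,D1,D2,D4,D0,D0,D4,D4,D1,D0,D1,D1,D4,D2,D0,D0,D4,D1,D0,D3,D2,D2,D2,D4,D3,D2,D0,D1,D4,D3,D1,D0,D4,D0,D1,D2,D2,D3,D4,D2,D3,D1,D3,D0,D1,D4,D4,D0,D1,D3,D1,D2,D3,D3,D3,D1,D1,D2,D4,D0,D2,D1,D4,D2,D2,D2,D4,D2,D2,D4,D3,D2,D3,D1,D1,D3,D1,D2,D2,D4,D2,D0,D3,D0,D2,D3,D4,D3,D4,D3,D2,D1,D3,D0,D4,D0,D3,D0,D1,D0,D3,D1,D2,D1,D1,D0,D2,D0,D0,D3,D3,D0,D4,D0,D2,D2,D3,D2,D0,D1,D3,D3,D0,D1,D1,D2,D3,D1,D1,D1,D3,D4,D0,D0,D3,D3],[D0,D0,D0,D0,D0,D3,D3,D2,D3,D1,D0,D2,D3,D3,D4,D3,D3,D4,D3,D1,D0,D0,D4,D4,D1,D0,D1,D0,D4,D1,D1,D1,D3,D3,D2,D0,D2,D1,D1,D1,D4,D3,D2,D1,D3,D4,D3,D3,D2,D2,D0,D2,D2,D2,D2,D3,D3,D4,D4,D1,D2,D4,D3,D3,D2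,D2,D0,D0,D4,D3,D3,D3,D0,D2,D0,D2,D4,D3,D0,D1,D4,D4,D0,D1,D4,D2,D4,D4,D4,D3,D1,D2,D0,D1,D0,D0,D2,D4,D4,D4,D0,D1,D0,D4,D4,D4,D1,D4,D1,D0,D1,D2,D2,D2,D3,D0,D2,D4,D0,D1,D4,D4,D0,D2,D1,D0,D2,D2,D4,D2,D0,D0,D1,D4,D1,D1,D4,D2,D4,D4,D1,D0,D0,D1,D2,D3,D4,D3,D2,D1,D3,D2,D1],[D1,D0,D3,D4,D0,D3,D0,D3,D3,D2,D2,D2,D0,D1,D0,D0,D1,D2,D2,D3,D4,D2,D1,D1,D0,D1,D4,D2,D3,D3,D4,D0,D0,D1,D4,D4,D1,D1,D3,D3,D1,D0,D0,D0,D3,D0,D1,D3,D2,D2,D3,D4,D2,D4,D2,D0,D2,D3,D1,D1,D4,D3,D3,D0,D3,D3,D4,D0,D1,D3,D2,D1,D2,D3,D0,D2,D1,D0,D1,D3,D1,D0,D3,D0,D3,D0,D3,D1,D4,D2,D3,D4,D2,D4,D0,D3,D4,D3,D3,D4,D3,D1,D1,D2,D3,D2,D2,D1,D4,D1,D3,D1,D4,D3,D0,D1,D2,D2,D4,D4,D4,D2,D1,D4,D1,D1,D3,D3,D2,D1,D4,D0,D3,D4,D4,D2,D0,D2,D0,D3,D3,D4,D4,D2,D2,D1,D4,D1,D3,D3,D4,D3,D4,D4,D3,D3,D0,D2,D3,D3],[D0,D0,D0,D0,D0,D3,D3,D4,D3,D2,D3,D3,D3,D1,D1,D3,D3,D1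,D0,D2,D3,D3,D1,D2,D2,D4,D0,D0,D1,D3,D2,D4,D4,D3,D3,D1,D0,D0,D3,D1,D2,D0,D4,D3,D3,D4,D0,D2,D0,D3,D3,D3,D2,D3,D4,D3,D2,D4,D0,D3,D0,D4,D3,D2,D3,D2,D0,D4,D4,D4,D3,D2,D4,D4,D1,D1,D4,D3,D4,D0,D1,D4,D1,D4,D3,D1,D0,D3,D4,D1,D2,D4,D0,D0,D3,D0,D4,D4,D2,D0,D2,D4,D0,D2,D0,D0,D2,D1,D2,D3,D0,D4,D0,D4,D1,D4,D1,D1,D3,D3,D2,D4,D4,D2,D2,D0,D4,D1,D3,D4,D4,D1,D3,D3,D0,D0,D1,D3,D4,D4,D1,D4,D3,D0,D3,D1,D3,D1,D2,D3,D2,D0,D3,D1,D0,D2,D1,D1,D3,D2,D1],[D0,D0,D0,D0,D0,D0,D0,D0,D0,D0,D0,D0,D0,D0,D0,D0,D4,D4,D4,D3,D1,D1,D1,D4,D0,D2,D0,D2,D1,D3,D2,D3,D3,D3,D3,D0,D0,D4,D4,D0,D0,D4,D3,D0,D4,D1,D1,D1,D0,D2,D3,D1,D0,D2,D3,D4,D0,D0,D0,D0,D3,D2,D4,D0,D2,D4,D2,D4,D2,D3,D2,D0,D1,D0,D3,D2,D0,D3,D0,D3,D2,D1,D2,D4,D2,D3,D0,D0,D2,D3,D2,D0,D4,D3,D1,D3,D0,D0,D0,D4,D1,D2,D2,D3,D3,D2,D4,D1,D1,D1,D3,D1,D2,D2,D0,D2,D2,D2,D1,D1,D4,D4,D2,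D0,D2,D3,D2,D4,D0,D0,D0,D0,D2,D2,D0,D2,D2,D2,D3,D4,D2,D4,D3,D2,D1,D1,D1,D0,D2,D2,D2,D2],[D0,D0,D0,D0,D0,D0,D0,D0,D0,D0,D0,D0,D0,D0,D0,D0,D0,D0,D0,D0,D0,D2,D2,D4,D3,D4,D3,D3,D3,D2,D0,D3,D1,D3,D4,D0,D0,D0,D4,D3,D3,D1,D4,D4,D0,D2,D4,D0,D4,D2,D0,D3,D0,D1,D1,D3,D3,D3,D0,D2,D4,D4,D1,D3,D3,D0,D0,D3,D0,D0,D3,D1,D1,D1,D2,D1,D1,D1,D3,D1,D3,D3,D4,D1,D2,D0,D3,D0,D2,D2,D1,D0,D2,D0,D1,D0,D4,D1,D0,D4,D4,D0,D3,D2,D2,D4,D2,D1,D4,D3,D2,D0,D0,D2,D4,D3,D0,D3,D1,D4,D3,D1,D3,D2,D2,D1,D0,D3,D2,D2,D2,D0,D0,D2,D4,D1,D2,D2,D2,D0,D0,D0,D2,D2,D2,D2,D3,D2,D3,D2,D1,D3,D4],[D0,D0,D0,D0,D0,D0,D0,D0,D0,D0,D0,D0,D0,D0,D0,D0,D4,D0,D2,D1,D4,D2,D3,D3,D1,D4,D1,D2,D0,D3,D3,D1,D0,D2,D1,D0,D0,D1,D0,D3,D3,D3,D1,D4,D4,D0,D2,D1,D1,D4,D2,D2,D1,D3,D3,D1,D0,D4,D1,D4,D1,D3,D0,D4,D1,D0,D3,D2,D2,D1,D1,D1,D4,D0,D2,D1,D2,D4,D2,D4,D1,D4,D0,D3,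D0,D1,D0,D2,D1,D1,D3,D2,D0,D3,D3,D3,D2,D1,D3,D2,D3,D2,D0,D1,D1,D0,D1,D2,D3,D4,D1,D2,D4,D1,D1,D0,D4,D0,D3,D0,D1,D3,D0,D2,D2,D0,D1,D0,D2,D3,D1,D0,D2,D3,D2,D1,D1,D4,D3,D2,D1,D3,D0,D0,D0,D1,D1,D3,D4,D0,D2,D3,D3,D3,D2,D0,D2,D0,D2,D2],[D0,D0,D0,D0,D0,D0,D0,D0,D0,D0,D0,D0,D0,D0,D0,D0,D0,D0,D0,D0,D0,D2,D2,D1,D2,D0,D4,D1,D2,D4,D2,D0,D0,D2,D4,D0,D1,D1,D1,D4,D3,D4,D4,D0,D2,D0,D3,D3,D0,D1,D4,D1,D2,D3,D2,D0,D0,D4,D1,D3,D2,D4,D0,D4,D3,D0,D0,D1,D2,D0,D1,D2,D1,D4,D1,D4,D0,D2,D2,D4,D0,D2,D0,D0,D1,D1,D2,D1,D3,D1,D2,D4,D3,D1,D0,D4,D0,D1,D1,D4,D4,D1,D1,D1,D0,D2,D0,D4,D3,D2,D1,D0,D2,D3,D4,D2,D3,D0,D1,D4,D1,D4,D1,D2,D1,D2,D2,D1,D1,D1,D3,D1,D0,D3,D3,D4,D2,D2,D4,D1,D2,D0,D4,D1,D4,D3,D0,D0,D3,D1,D2,D4,D2,D2,D4,D2,D1,D2,D1,D3,D4]]"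

definition B_5o :: "dig list list" where
  "B_5o = [[D4,D0,D2,D1,D4,D2,D1,D0,D4,D4,D2,D0,D1,D2,D1,D1,D3,D2,D2,D0,D2,D2,D0,D3,D1,D4,D1,D1,D3,D0,D0,D4,D1,D1,D4,D3,D3,D0,D2,D1,D3,D4,D3,D1,D1,D0,D3,D0,D3,D4,D4,D0,D4,D0,D4,D4,D3,D2,D4,D3,D2,D2,D0,D0,D3,D0,D2,D4,D0,D4,D0,D2,D1,D2,D4,D1,D3,D0,D0,D3,D4,D4,D0,D4,D1,D1,D0,D1,D4,D4,D2,D1,D3,D1,D4,D2,D3,D3,D3,D3,D1,D2,D1,D0,D4,D0,D0,D3,D2,D0,D0,D2,D0,D1,D3,D3,D1,D0,D1,D2,D3,D2,D4,D4,D3,D4,D0,D3,D4,D2,D1,D4,D4,D4,D3,D4,D1,D4,D1,D4,D4,D0,D3,D2,D2],[D0,D0,D0,D0,D0,D2,D2,D1,D2,D3,D4,D4,D4,D4,D3,D2,D1,D2,D3,D2,D2,D0,D1,D0,D1,D3,D2,D0,D3,D1,D3,D1,D0,D4,D3,D2,D4,D0,D4,D4,D2,D3,D4,D0,D3,D0,D1,D0,D0,D3,D4,D0,D0,D3,D2,D0,D2,D1,D2,D2,D4,D1,D4,D3,D2,D4,D1,D2,D2,D0,D2,D4,D0,D2,D2,D2,D0,D0,D2,D3,D3,D4,D4,D1,D2,D0,D1,D0,D0,D2,D0,D4,D3,D0,D0,D0,D1,D2,D4,D4,D0,D4,D3,D1,D0,D1,D1,D2,D1,D1,D0,D1,D1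,D4,D0,D1,D3,D1,D4,D4,D4,D3,D2,D3,D4,D0,D2,D4,D3,D3,D0,D3,D3,D3,D4,D3,D4,D3,D4,D1,D1,D3,D4,D2,D3,D4],[D0,D0,D0,D0,D0,D0,D0,D0,D1,D0,D4,D3,D3,D4,D4,D4,D3,D2,D0,D4,D2,D3,D4,D1,D0,D1,D1,D4,D3,D2,D0,D3,D4,D0,D1,D3,D4,D4,D3,D2,D3,D2,D2,D4,D4,D2,D2,D2,D4,D1,D0,D4,D3,D2,D1,D1,D3,D0,D3,D3,D4,D2,D3,D0,D0,D4,D2,D3,D3,D1,D0,D1,D2,D4,D0,D2,D1,D0,D4,D0,D0,D2,D3,D0,D3,D4,D3,D4,D1,D2,D2,D4,D0,D2,D3,D0,D0,D0,D1,D4,D3,D3,D1,D2,D0,D2,D3,D1,D4,D0,D2,D1,D4,D1,D2,D1,D2,D2,D4,D3,D4,D2,D2,D2,D4,D2,D2,D1,D4,D0,D1,D4,D3,D1,D2,D1,D1,D4,D0,D3,D1,D2,D0,D1,D3],[D0,D0,D0,D0,D0,D0,D0,D0,D0,D0,D0,D0,D0,D3,D3,D2,D3,D3,D2,D4,D3,D1,D1,D4,D0,D1,D4,D1,D0,D3,D4,D0,D2,D0,D3,D4,D3,D4,D0,D4,D4,D2,D3,D3,D0,D3,D1,D3,D0,D1,D4,D1,D1,D4,D4,D3,D2,D3,D4,D0,D0,D2,D2,D3,D2,D4,D1,D1,D0,D3,D2,D0,D0,D1,D3,D3,D1,D1,D1,D4,D1,D1,D4,D0,D1,D4,D0,D2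,D1,D1,D3,D1,D3,D1,D1,D4,D2,D2,D2,D2,D1,D1,D0,D0,D3,D0,D1,D3,D4,D4,D1,D0,D0,D1,D1,D3,D2,D1,D2,D4,D3,D2,D0,D3,D2,D0,D4,D3,D3,D3,D1,D4,D3,D1,D1,D4,D3,D1,D3,D3,D4,D3,D4,D0,D3,D1]]"

definition G_5o :: "dig list" where
  "G_5o = [D0,D3,D0,D4,D2,D2,D0,D1,D2,D4,D0,D3,D2,D3,D1,D1,D3,D1,D3,D3,D1,D2,D3,D0,D4,D3,D4,D2,D0,D2,D3,D3,D3,D2,D4,D2,D4,D0,D1,D4,D0,D4,D0,D2,D0,D2,D0,D1,D2,D3,D3,D1,D1,D2,D0,D2,D1,D2,D0,D0,D3,D1,D3,D0,D1,D3,D4,D2,D2,D3,D1,D4,D0,D2,D4,D1,D1,D3,D4,D3,D3,D3,D4,D0,D2,D1,D1,D1,D3,D3,D2,D4,D3,D1,D1,D1,D1,D4,D2,D4,D2,D0,D0,D4,D4,D0,D3,D3,D2,D2,D1,D4,D3,D2,D3,D1,D4,D3,D0,D2,D1,D2,D4,D4,D1,D2,D0,D2,D3,D3,D3,D1,D1,D1,D0,D3,D1,D4,D0,D0,D0,D1,D2,D3,D4,D4,D3,D0,D3,D1,D3,D1,D4,D4,D2,D0,D1]"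

definition K_5o :: "dig list" where
  "K_5o = [D0,D4,D1,D2,D3,D4,D1]"

definition Ki_5o :: "int list" where
  "Ki_5o = [0, (-1), 1, 2, (-2), (-1), 1]"

lemma c1_5o: "map trimd (bpadd a5 (bpmul a5 m5 (map (map red5) Pint) A_5o) (bpmul a5 m5 (map (map red5) Qodd) B_5o)) = G_5o # [[],[],[],[],[],[],[],[],[],[],[]]"
  by (simp add: A_5o_def B_5o_def G_5o_def Pint_def Qodd_def red5_def)

definition S_5o :: "dig list" where
  "S_5o = [D2,D2,D2,D0,D1,D2,D3,D0,D2,D0,D0,D2,D2,D2,D1,D1,D3,D0,D2,D0,D0,D1,D4,D4,D2,D2,D3,D3,D0,D2,D2,D3,D4,D0,D0,D2,D1,D3,D2,D4,D4,D1,D0,D2,D3,D0,D2,D2,D2,D2,D4,D3,D0,D3,D3,D4,D0,D4,D1,D0,D2,D3,D0,D2,D1,D0,D4,D3,D4,D2,D1,D3,D3,D0,D0,D1,D3,D4,D0,D3,D0,D1,D4,D1,D4,D1,D3,D2,D0,D4,D4,D0,D1,D3,D4,D1,D3,D3,D2,D3,D4,D1,D0,D4,D1,D4,D1,D1,D1,D2,D1,D0,D1,D0,D2,D2,D2,D3,D4,D0,D0,D2,D2,D4,D2,D4,D3,D2,D4,D2,D1,D2,D2,D1,D4,D0,D2,D0,D1,D1,D0,D0,D4,D0,D0,D4,D0,D4,D0,D1,D1]"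

lemma cK_5o: "trimd (pmul a5 m5 K_5o S_5o) = G_5o"
  by (simp add: K_5o_def S_5o_def G_5o_def)

lemma Ki_5o: "map red5 Ki_5o = K_5o"
  by (simp add: K_5o_def Ki_5o_def red5_def)

lemma Kev_5o: "evI Ki_5o x = x * (x - 1) ^ 3 * (x + 1) ^ 2"
  by (simp add: Ki_5o_def algebra_simps eval_nat_numeral power2_eq_square)

definition U_5o :: "dig list" where
  "U_5o = [D3,D3,D4,D1,D3,D1,D4,D4,D1,D4,D0,D0,D2,D4,D2,D3,D0,D1,D2,D3,D0,D0,D2,D3,D2,D3,D0,D2,D1,D0,D0,D4,D2,D0,D1,D3,D0,D1,D0,D1,D3,D2,D4,D2,D3,D4,D3,D2,D1,D3,D0,D2,D2,D4,D2,D1,D3,D2,D1,D4,D4,D0,D3,D4,D4,D2,D2,D3,D0,D4,D2,D2,D1,D2,D4,D3,D1,D3,D4,D1,D1,D1,D1,D4,D4,D2,D4,D0,D0,D2,D2,D2,D0,D2,D4,D4,D3,D3,D1,D4,D0,D0,D4,D0,D1,D2,D2,D4,D2,D1,D0,D0,D0,D3,D2,D3,D2,D4,D2,D3,D1,D2,D4,D1,D2,D0,D3,D2,D3,D3,D3,D0,D2,D0,D1,D4,D1,D3,D0,D3,D4,D3,D4,D2,D0,D0,D0,D3,D4,D3,D0,D2,D1,D2,D4,D2,D3,D2,D0,D0,D0,D2,D2,D1,D1,D4,D1,D2,D0,D0,D0,D1,D4,D0,D4,D0,D0,D1,D3,D3,D3,D4,D3,D2,D3,D2,D4,D3,D1,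D2,D3,D4,D0,D3,D4,D3,D3,D0,D1,D4,D3,D2,D3,D4,D0,D2,D3,D3,D1,D0,D2,D3,D3,D4,D2,D0,D0,D0,D3,D2,D3,D1,D1,D3,D1,D2,D0,D0,D1,D0,D1,D3,D1,D3,D4,D2,D2,D0,D3,D3,D3,D3,D1,D3,D3,D0,D4,D4,D2,D1,D3,D3,D3,D3,D0,D1,D1,D2,D3,D0,D0,D1,D4,D1,D2,D4,D1,D1,D3,D0,D3,D2,D1,D3,D4,D4,D0,D0,D2,D0,D0,D2,D3,D1,D0,D4,D3,D2,D2,D0,D3,D0,D3,D3,D4,D0,D2,D3,D4,D4]"

definition V_5o :: "dig list" where
  "V_5o = [D0,D4,D0,D3,D3,D1,D2,D3,D2,D2,D2,D4,D3,D1,D4,D3,D3,D2,D1,D0,D1,D2,D4,D4,D4,D3,D1,D2,D2,D0,D1,D2,D1,D2,D2,D2,D0,D0,D0,D1,D0,D2,D2,D2,D4,D2,D2,D1,D1,D3,D2,D3,D1,D2,D4,D3,D3,D3,D4,D1,D4,D4,D3,D3,D3,D1,D4,D0,D0,D4,D3,D0,D1,D0,D4,D1,D2,D2,D2,D2,D0,D3,D1,D1,D4,D0,D1,D1,D3,D0,D4,D3,D1,D1,D1,D2,D4,D4,D2,D4,D0,D1,D1,D3,D3,D2,D1,D3,D3,D3,D4,D1,D2,D0,D2,D2,D3,D0,D3,D0,D0,D3,D2,D2,D2,D2,D2,D3,D0,D2,D4,D3,D1,D3,D2,D0,D3,D2,D4,D4,D3,D4,D3,D0,D1,D0,D2,D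2,D2,D1]"

lemma c2_5o: "trimd (padd a5 (pmul a5 m5 S_5o U_5o) (pmul a5 m5 (spread 2 D0 S_5o) V_5o)) = [D1]"
  by (simp add: S_5o_def U_5o_def V_5o_def)

definition A_3t :: "dig list list" where
  "A_3t = [[D1,D2,D1,D0,D2,D0,D1,D1,D0,D0,D1,D1,D2,D1,D1,D2,D0,D1,D2,D1,D2,D2,D2,D2,D0,D1,D2,D0,D2,D0,D2,D0,D1,D0,D1,D1,D0,D0,D1,D2,D2,D2,D0,D0,D1,D2,D1,D2,D1,D1,D0,D0,D2,D0,D0,D1,D1,D1,D0,D1,D2,D2,D2,D0,D0,D1,D0,D1,D2,D0,D0,D1,D2,D0,D1,D0,D2,D1,D1,D2,D1,D1,D1,D1,D2,D0,D2,D2,D0,D0,D0,D1,D1,D0,D2,D1,D1,D1,D0,D2,D2,D1,D1,D0,D1,D2,D0,D1,D1,D1,D2,D2,D2,D2,D1,D0,D0,D0,D0,D0,D0,D0,D0,D1,D0,D0,D2,D0,D1,D1,D1,D2,D1,D1,D1,D0,D0,D1,D0,D1,D1,D2,D0,D0,D2,D1,D0,D0,D2],[D0,D0,D0,D0,D0,D1,D1,D0,D2,D2,D1,D2,D0,D2,D0,D1,D0,D0,D2,D2,D1,D2,D2,D1,D1,D1,D0,D0,D2,D1,D0,D1,D1,D1,D0,D0,D1,D2,D0,D1,D2,D2,D1,D2,D0,D1,D0,D1,D2,D2,D2,D0,D1,D2,D2,D2,D0,D1,D2,D0,D0,D2,D2,D2,D2,D0,D0,D1,D0,D0,D0,D2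,D0,D1,D2,D2,D2,D1,D0,D2,D0,D0,D0,D1,D2,D0,D1,D2,D1,D2,D2,D1,D1,D0,D1,D0,D0,D0,D0,D2,D0,D1,D2,D0,D2,D0,D1,D2,D1,D0,D0,D2,D1,D2,D1,D0,D2,D0,D2,D1,D2,D2,D1,D0,D1,D0,D2,D0,D1,D1,D1,D2,D1,D2,D2,D1,D0,D2,D0,D2,D0,D0,D0,D2,D0,D2,D0,D2,D1,D1],[D1,D1,D0,D0,D2,D0,D1,D1,D1,D1,D2,D1,D1,D2,D0,D1,D0,D2,D0,D0,D0,D1,D2,D0,D2,D0,D0,D2,D1,D0,D1,D0,D1,D1,D1,D0,D1,D2,D0,D2,D1,D1,D0,D2,D2,D1,D1,D1,D0,D0,D0,D2,D1,D2,D1,D0,D2,D2,D1,D2,D2,D1,D0,D2,D1,D1,D0,D1,D0,D0,D2,D2,D1,D0,D1,D0,D1,D2,D2,D1,D0,D1,D0,D1,D2,D1,D0,D0,D1,D1,D1,D1,D2,D2,D1,D0,D2,D0,D2,D1,D2,D2,D0,D1,D1,D1,D1,D0,D0,D2,D2,D2,D0,D0,D0,D0,D1,D0,D2,D0,D1,D1,D1,D0,D2,D0,D2,D2,D0,D2,D1,D0,D0,D1,D0,D1,D2,D2,D1,D0,D2,D2,D2,D2,D2,D2,D2,D2,D2,D0,D1,D1,D0,D0,D1,D0,D2],[D0,D0,D0,D0,D0,D1,D1,D0,D2,D2,D0,D0,D1,D2,D1,D1,D0,D2,D0,D1,D2,D0,D0,D0,D0,D0,D0,D0,D1,D0,D0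,D2,D0,D0,D2,D1,D2,D2,D2,D1,D1,D0,D1,D2,D2,D2,D0,D0,D0,D2,D2,D0,D0,D2,D0,D0,D2,D1,D2,D0,D1,D1,D0,D2,D2,D1,D2,D0,D1,D0,D1,D0,D0,D1,D2,D1,D1,D2,D2,D1,D2,D2,D0,D1,D2,D1,D1,D1,D2,D2,D1,D2,D1,D2,D0,D2,D1,D0,D0,D2,D1,D1,D1,D2,D1,D0,D2,D1,D1,D1,D0,D0,D1,D2,D2,D1,D2,D0,D2,D0,D1,D1,D1,D2,D0,D2,D1,D2,D1,D2,D2,D0,D1,D2,D2,D2,D1,D0,D0,D1,D2,D1,D0,D0,D2,D2,D1,D2,D2,D0,D0,D2,D0,D1,D0,D2,D1,D1],[D0,D0,D0,D0,D0,D0,D0,D0,D0,D0,D0,D0,D0,D0,D0,D0,D2,D1,D0,D1,D0,D1,D2,D1,D2,D0,D2,D1,D2,D2,D1,D0,D0,D2,D2,D1,D0,D0,D1,D1,D1,D0,D2,D2,D0,D0,D2,D0,D2,D0,D0,D2,D1,D0,D2,D0,D2,D1,D2,D2,D2,D1,D0,D1,D0,D0,D2,D0,D1,D0,D1,D2,D0,D0,D1,D2,D2,D1,D0,D0,D2,D0,D0,D1,D1,D2,D0,D0,D0,D0,D1,D2,D0,D1,D2,D1,D1,D1,D1,D0,D1,D1,D2,D0,D2,D2,D0,D0,D0,D2,D0,D1,D2,D0,D2,D0,D2,D1,D1,D0,D1,D2,D2,D0,D0,D2,D0,D2,D1,D1,D1,D1,D0,D2,D2,D0,D2,D1,D1,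D1,D2,D1,D0,D1,D0,D2,D2,D0,D1],[D0,D0,D0,D0,D0,D0,D0,D0,D0,D0,D0,D0,D0,D0,D0,D0,D0,D0,D0,D0,D0,D2,D2,D1,D2,D0,D0,D2,D0,D0,D1,D1,D2,D0,D0,D1,D0,D2,D2,D0,D0,D0,D0,D2,D0,D2,D0,D1,D0,D2,D0,D0,D2,D0,D2,D2,D2,D0,D2,D1,D1,D1,D1,D1,D1,D2,D2,D1,D2,D0,D2,D1,D1,D1,D0,D1,D2,D0,D2,D1,D2,D1,D0,D2,D0,D1,D1,D1,D1,D0,D2,D2,D1,D1,D2,D2,D2,D0,D1,D1,D2,D0,D0,D2,D2,D1,D2,D1,D1,D2,D2,D0,D0,D0,D1,D1,D2,D2,D2,D0,D0,D1,D2,D0,D2,D0,D2,D2,D0,D0,D0,D1,D1,D2,D1,D1,D1,D0,D2,D2,D0,D0,D0,D2,D1,D1,D1,D2,D2,D2],[D0,D0,D0,D0,D0,D0,D0,D0,D0,D0,D0,D0,D0,D0,D0,D0,D2,D2,D0,D0,D0,D2,D1,D1,D1,D0,D1,D1,D2,D2,D0,D1,D2,D2,D2,D2,D0,D0,D2,D2,D2,D2,D2,D1,D0,D2,D1,D2,D1,D2,D2,D2,D0,D2,D0,D1,D1,D0,D1,D2,D0,D1,D0,D1,D2,D1,D1,D2,D0,D2,D1,D0,D0,D1,D0,D2,D1,D1,D2,D0,D0,D2,D2,D1,D0,D0,D0,D2,D1,D1,D0,D2,D2,D2,D0,D2,D1,D1,D2,D2,D0,D0,D0,D0,D2,D0,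D2,D1,D0,D1,D1,D1,D1,D0,D1,D1,D1,D2,D1,D0,D0,D1,D1,D2,D1,D2,D0,D1,D1,D1,D0,D0,D1,D2,D1,D2,D0,D0,D2,D2,D2,D1,D1,D0,D0,D0,D2,D1,D2,D1,D2,D2,D1,D0,D1,D0,D1],[D0,D0,D0,D0,D0,D0,D0,D0,D0,D0,D0,D0,D0,D0,D0,D0,D0,D0,D0,D0,D0,D2,D2,D0,D1,D0,D2,D2,D2,D0,D1,D0,D1,D1,D1,D1,D0,D0,D2,D1,D1,D1,D2,D0,D0,D0,D0,D1,D2,D1,D1,D2,D2,D2,D2,D1,D2,D0,D0,D0,D2,D2,D0,D1,D2,D1,D1,D1,D2,D1,D0,D1,D1,D2,D2,D2,D2,D0,D2,D0,D2,D2,D2,D2,D0,D0,D2,D0,D2,D2,D2,D1,D0,D0,D0,D0,D2,D0,D1,D0,D0,D0,D2,D1,D2,D1,D2,D0,D0,D1,D2,D0,D0,D0,D2,D1,D1,D2,D1,D0,D2,D1,D1,D2,D0,D0,D1,D1,D1,D0,D2,D1,D2,D0,D1,D0,D2,D2,D1,D0,D0,D1,D2,D2,D0,D0,D2,D2,D1,D2,D0,D2,D0,D1,D1,D2,D2,D2]]"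

definition B_3t :: "dig list list" where
  "B_3t = [[D2,D2,D0,D0,D0,D2,D1,D0,D2,D1,D1,D0,D1,D1,D2,D1,D2,D2,D1,D1,D1,D2,D0,D1,D2,D0,D2,D2,D2,D0,D2,D0,D0,D1,D0,D1,D0,D1,D2,D1,D1,D0,D1,D0,D1,D1,D2,D2,D1,D1,D1,D2,D0,D0,D0,D0,D2,D2,D0,D0,D2,D0,D0,D1,D0,D0,D2,D2,D2,D1,D2,D0,D1,D2,D0,D2,D2,D2,D2,D0,D1,D2,D1,D0,D2,D1,D0,D1,D2,D1,D0,D2,D2,D1,D1,D1,D1,D0,D1,D2,D2,D1,D2,D1,D2,D0,D2,D1,D1,D0,D1,D0,D1,D1,D1,D1,D1,D1,D0,D0,D0,D2,D0,D1,D0,D2,D1,D0,D0,D2,D2,D2,D2,D2,D2,D1,D1,D2,D0,D1,D0,D2],[D0,D0,D0,D0,D0,D2,D2,D0,D1,D1,D0,D2,D1,D0,D1,D1,D2,D0,D2,D0,D0,D0,D1,D2,D2,D2,D0,D0,D2,D0,D0,D2,D0,D0,D0,D2,D2,D0,D2,D2,D0,D2,D0,D0,D1,D0,D0,D0,D2,D2,D0,D2,D0,D2,D0,D1,D0,D2,D2,D0,D0,D2,D2,D2,D2,D2,D2,D2,D0,D0,D0,D0,D2,D2,D1,D2,D1,D1,D1,D0,D0,D2,D2,D1,D1,D1,D2,D1,D0,D0,D1,D0,D1,D2,D2,D2,D0,D1,D2,D0,D1,D1,D2,D0,D2,D2,D1,D2,D2,D2,D2,D1,D0,D2,D2,D2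,D1,D0,D1,D2,D2,D2,D2,D1,D1,D2,D2,D2,D0,D0,D0,D0,D0,D0,D1,D1,D2,D1,D2,D0,D2,D1,D1],[D0,D0,D0,D0,D0,D0,D0,D0,D1,D1,D1,D0,D1,D0,D0,D1,D0,D2,D1,D2,D2,D2,D0,D0,D1,D0,D2,D0,D0,D2,D1,D0,D1,D2,D2,D2,D1,D1,D2,D2,D1,D0,D0,D2,D1,D2,D0,D2,D2,D2,D1,D1,D1,D0,D1,D1,D1,D1,D2,D1,D0,D0,D2,D1,D0,D0,D1,D0,D2,D1,D2,D2,D1,D1,D0,D1,D2,D2,D1,D2,D2,D2,D0,D2,D0,D2,D0,D2,D1,D0,D2,D0,D1,D0,D0,D0,D0,D2,D2,D2,D2,D2,D0,D0,D2,D2,D0,D0,D0,D2,D2,D0,D2,D1,D2,D1,D1,D2,D1,D0,D2,D2,D0,D0,D1,D2,D1,D2,D0,D2,D0,D0,D2,D0,D1,D1,D2,D1,D2,D2,D1,D1],[D0,D0,D0,D0,D0,D0,D0,D0,D0,D0,D0,D0,D0,D1,D1,D1,D2,D1,D2,D2,D0,D0,D2,D0,D1,D0,D1,D1,D2,D1,D1,D1,D0,D1,D1,D1,D2,D0,D1,D0,D2,D2,D0,D2,D0,D2,D0,D1,D1,D2,D2,D0,D2,D0,D2,D2,D2,D1,D2,D1,D0,D1,D2,D2,D0,D0,D2,D2,D0,D1,D1,D0,D2,D1,D1,D0,D0,D2,D1,D2,D0,D1,D1,D0,D2,D1,D1,D2,D1,D1,D2,D2,D2,D0,D1,D0,D0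,D0,D2,D2,D0,D0,D0,D1,D0,D0,D0,D2,D2,D0,D1,D2,D0,D2,D2,D1,D2,D1,D1,D1,D1,D2,D2,D0,D0,D0,D2,D0,D0,D2,D0,D2,D0,D0,D1,D1,D0,D2,D1,D1,D0,D1,D2]]"

definition G_3t :: "dig list" where
  "G_3t = [D0,D1,D2,D1,D0,D1,D2,D2,D2,D0,D0,D2,D1,D1,D0,D2,D0,D2,D2,D2,D0,D0,D2,D1,D0,D2,D0,D0,D1,D0,D2,D1,D0,D0,D1,D1,D0,D0,D2,D1,D0,D1,D2,D0,D0,D1,D1,D1,D2,D2,D1,D1,D1,D2,D2,D0,D0,D1,D1,D1,D1,D1,D2,D2,D0,D2,D2,D2,D0,D0,D0,D2,D1,D0,D0,D1,D0,D1,D0,D1,D0,D0,D1,D2,D0,D0,D0,D2,D2,D2,D0,D2,D2,D1,D1,D1,D1,D1,D0,D0,D2,D2,D1,D1,D1,D2,D2,D1,D1,D1,D0,D0,D2,D1,D0,D1,D2,D0,D0,D1,D1,D0,D0,D1,D2,D0,D1,D0,D0,D2,D0,D1,D2,D0,D0,D2,D2,D2,D0,D2,D0,D1,D1,D2,D0,D0,D2,D2,D2,D1,D0,D1,D2,D1]"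

definition K_3t :: "dig list" where
  "K_3t = [D0,D1,D0,D2,D0,D0,D0,D2,D0,D1]"

definition Ki_3t :: "int list" where
  "Ki_3t = [0, 1, 0, (-4), 0, 6, 0, (-4), 0, 1]"

lemma c1_3t: "map trimd (bpadd a3 (bpmul a3 m3 (map (map red3) Pint) A_3t) (bpmul a3 m3 (map (map red3) Qtwo) B_3t)) = G_3t # [[],[],[],[],[],[],[],[],[],[],[]]"
  by (simp add: A_3t_def B_3t_def G_3t_def Pint_def Qtwo_def red3_def)

definition S_3t :: "dig list" where
  "S_3t = [D1,D2,D2,D2,D0,D1,D0,D2,D1,D2,D1,D2,D2,D0,D2,D0,D1,D2,D1,D0,D1,D2,D1,D1,D0,D2,D0,D2,D0,D0,D0,D1,D0,D2,D1,D0,D1,D0,D2,D1,D1,D1,D1,D1,D0,D0,D0,D2,D2,D0,D2,D0,D1,D1,D0,D2,D1,D0,D1,D2,D1,D2,D1,D0,D0,D1,D2,D1,D2,D2,D0,D1,D2,D1,D0,D2,D2,D1,D2,D1,D0,D0,D1,D2,D1,D2,D1,D0,D1,D2,D0,D1,D1,D0,D2,D0,D2,D2,D0,D0,D0,D1,D1,D1,D1,D1,D2,D0,D1,D0,D1,D2,D0,D1,D0,D0,D0,D2,D0,D2,D0,D1,D1,D2,D1,D0,D1,D2,D1,D0,D2,D0,D2,D2,D1,D2,D1,D2,D0,D1,D0,D2,D2,D2,D1]"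

lemma cK_3t: "trimd (pmul a3 m3 K_3t S_3t) = G_3t"
  by (simp add: K_3t_def S_3t_def G_3t_def)

lemma Ki_3t: "map red3 Ki_3t = K_3t"
  by (simp add: K_3t_def Ki_3t_def red3_def)

lemma Kev_3t: "evI Ki_3t x = x * (x - 1) ^ 4 * (x + 1) ^ 4"
  by (simp add: Ki_3t_def algebra_simps eval_nat_numeral power2_eq_square)

definition U_3t :: "dig list" where
  "U_3t = [D1,D0,D2,D0,D0,D1,D0,D2,D2,D1,D2,D1,D0,D1,D0,D1,D2,D2,D0,D1,D1,D1,D1,D1,D0,D1,D0,D0,D2,D2,D0,D2,D1,D1,D1,D2,D2,D1,D2,D2,D1,D1,D1,D2,D1,D1,D0,D1,D2,D0,D2,D2,D0,D1,D0,D2,D0,D1,D2,D2,D2,D2,D1,D2,D0,D2,D2,D0,D2,D1,D2,D1,D0,D2,D0,D0,D1,D2,D1,D1,D1,D1,D0,D2,D0,D0,D0,D2,D1,D0,D2,D0,D2,D1,D2,D1,D0,D1,D0,D0,D1,D0,D1,D0,D0,D0,D1,D1,D0,D2,D1,D2,D2,D0,D1,D2,D1,D2,D1,D0,D0,D0,D0,D2,D0,D0,D0,D2,D2,D2,D2,D2,D1,D2,D0,D1,D2,D1,D1,D2,D1,D2,D2,D0,D0,D0,D1,D1,D1,D0,D2,D1,D0,D1,D0,D1,D1,D0,D0,D0,D0,D2,D0,D1,D0,D2,D0,D2,D2,D1,D0,D0,D0,D1,D0,D2,D1,D2,D0,D1,D0,D1,D0,D0,D1,D1,D0,D2,D0,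D0,D2,D2,D0,D1,D1,D1,D2,D1,D1,D0,D2,D2,D1,D1,D1,D1,D0,D2,D0,D0,D0,D1,D0,D0,D2,D0,D0,D2,D2,D2,D1,D2,D0,D0,D2,D2,D0,D2,D2,D2,D2,D1,D0,D0,D1,D1,D0,D2,D1,D1,D0,D2,D2,D1,D1,D0,D2,D2,D1,D2,D2,D1,D1,D0,D0,D0,D0,D1,D1,D1,D2,D2,D2,D2,D2,D0,D0,D1,D1,D2,D1,D2,D1,D1,D2,D1,D0,D0,D1,D0,D0,D1,D0,D1,D0,D1,D1,D2]"

definition V_3t :: "dig list" where
  "V_3t = [D0,D1,D2,D2,D0,D2,D0,D0,D1,D0,D1,D0,D1,D0,D0,D1,D0,D0,D2,D0,D1,D2,D1,D1,D1,D0,D2,D1,D1,D2,D0,D2,D0,D0,D2,D2,D0,D2,D2,D0,D2,D0,D2,D2,D2,D2,D1,D1,D2,D0,D0,D2,D1,D2,D1,D0,D2,D1,D2,D2,D2,D0,D0,D0,D1,D2,D1,D1,D2,D1,D2,D0,D2,D2,D0,D1,D2,D2,D1,D1,D2,D1,D2,D0,D0,D0,D2,D0,D0,D1,D1,D1,D2,D0,D0,D1,D1,D2,D0,D0,D1,D2,D1,D0,D2,D2,D2,D0,D1,D0,D0,D2,D1,D0,D0,D1,D0,D0,D1,D1,D1,D1,D1,D2,D0,D0,D1,D0,D2,D2,D0,D2,D0,D1,D1,D2,D1,D1,D1,D1,D0,D1,D1,D1]"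

lemma c2_3t: "trimd (padd a3 (pmul a3 m3 S_3t U_3t) (pmul a3 m3 (spread 2 D0 (altd n3 S_3t)) V_3t)) = [D1]"
  by (simp add: S_3t_def U_3t_def V_3t_def)

definition A_5t :: "dig list list" where
  "A_5t = [[D2,D3,D2,D1,D0,D4,D1,D2,D3,D1,D4,D3,D3,D0,D0,D0,D1,D4,D1,D4,D1,D3,D1,D2,D1,D0,D2,D3,D1,D1,D4,D0,D3,D0,D0,D1,D0,D2,D1,D2,D2,D4,D0,D0,D1,D0,D3,D4,D3,D2,D2,D4,D0,D0,D2,D4,D4,D4,D4,D0,D1,D0,D0,D2,D2,D4,D3,D1,D4,D4,D0,D0,D2,D1,D4,D1,D1,D2,D4,D2,D1,D1,D2,D1,D3,D0,D4,D3,D0,D1,D3,D3,D0,D0,D0,D2,D3,D1,D3,D0,D4,D1,D1,D4,D3,D4,D4,D0,D3,D1,D2,D3,D4,D0,D3,D3,D3,D4,D1,D1,D0,D0,D3,D2,D4,D0,D1,D0,D0,D4,D4,D2,D1,D0,D4,D3,D0,D2,D1,D2,D2,D3,D0,D4,D0,D3],[D0,D0,D0,D0,D0,D1,D3,D3,D4,D3,D4,D2,D3,D4,D2,D0,D2,D1,D0,D4,D0,D4,D0,D2,D3,D0,D2,D3,D4,D2,D3,D4,D3,D1,D3,D4,D3,D0,D1,D3,D1,D1,D4,D2,D3,D3,D2,D3,D4,D2,D2,D2,D0,D2,D0,D0,D4,D1,D1,D2,D0,D1,D4,D0,D4,D1,D4,D0,D3,D0,D4,D0,D1,D3,D3,D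3,D4,D1,D1,D2,D2,D4,D4,D2,D3,D4,D4,D4,D1,D1,D3,D0,D4,D3,D3,D4,D0,D0,D2,D2,D4,D4,D1,D1,D2,D0,D2,D4,D0,D4,D3,D1,D3,D2,D0,D0,D1,D0,D4,D3,D2,D3,D3,D1,D4,D3,D2,D3,D2,D4,D4,D2,D2,D0,D4,D2,D1,D0,D4,D3,D0,D3,D3,D2,D0,D1,D1],[D2,D1,D1,D0,D0,D3,D2,D3,D4,D4,D0,D1,D2,D0,D3,D3,D2,D0,D0,D3,D0,D0,D1,D0,D2,D1,D1,D3,D4,D2,D3,D1,D2,D3,D3,D3,D3,D2,D3,D1,D1,D2,D1,D0,D1,D1,D4,D2,D0,D4,D2,D4,D3,D0,D4,D1,D0,D0,D0,D4,D4,D2,D1,D4,D1,D4,D0,D2,D2,D2,D3,D1,D1,D3,D3,D4,D0,D4,D1,D0,D3,D0,D3,D4,D1,D2,D3,D0,D2,D1,D0,D1,D0,D0,D4,D1,D2,D4,D2,D3,D2,D3,D0,D3,D2,D2,D4,D0,D1,D4,D2,D2,D2,D0,D4,D3,D1,D1,D4,D3,D3,D1,D2,D3,D3,D4,D3,D4,D1,D1,D3,D1,D2,D0,D4,D0,D2,D3,D3,D3,D2,D4,D3,D2,D1,D0,D3,D0,D0,D0,D3,D1,D0,D3],[D0,D0,D0,D0,D0,D1,D3,D3,D4,D3,D3,D1,D0,D3,D1,D1,D1,D4,D3,D3,D2,D0,D4,D1,D1,D3,D1,D2,D3,D4,D4,D3,D4,D1,D0,D0,D4,D4,D1,D2,D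4,D2,D1,D1,D2,D2,D2,D0,D3,D4,D0,D2,D2,D1,D4,D0,D2,D0,D1,D1,D2,D1,D2,D2,D2,D2,D1,D3,D4,D4,D1,D2,D2,D2,D1,D4,D0,D3,D4,D4,D4,D4,D2,D1,D3,D0,D3,D1,D0,D1,D0,D1,D2,D4,D2,D1,D0,D1,D2,D3,D4,D4,D1,D4,D4,D2,D3,D3,D0,D1,D0,D4,D0,D1,D4,D3,D4,D4,D2,D1,D4,D2,D2,D1,D2,D4,D3,D2,D4,D3,D4,D2,D3,D0,D2,D1,D1,D2,D2,D2,D0,D4,D1,D2,D0,D2,D3,D4,D2,D3,D2,D2,D0,D1,D1],[D0,D0,D0,D0,D0,D0,D0,D0,D0,D0,D0,D0,D0,D0,D0,D0,D3,D2,D4,D2,D1,D3,D0,D0,D3,D2,D3,D2,D0,D0,D1,D2,D1,D4,D4,D0,D3,D0,D4,D3,D0,D4,D0,D2,D2,D0,D4,D1,D4,D3,D0,D1,D4,D2,D0,D0,D2,D2,D1,D3,D3,D0,D2,D3,D2,D2,D4,D0,D3,D0,D1,D0,D1,D0,D4,D4,D0,D4,D0,D2,D1,D1,D1,D1,D3,D2,D0,D1,D2,D0,D4,D1,D3,D1,D3,D2,D2,D2,D0,D3,D4,D0,D2,D2,D4,D4,D2,D0,D1,D2,D0,D3,D2,D0,D1,D1,D0,D1,D2,D0,D0,D1,D3,D4,D3,D0,D3,D0,D3,D2,D1,D1,D2,D3,D2,D4,D4,D0,D0,D4,D3,D0,D0,D4,D0,D2],[D0,D0,D0,D0,D0,D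0,D0,D0,D0,D0,D0,D0,D0,D0,D0,D0,D0,D0,D0,D0,D0,D4,D2,D0,D0,D0,D0,D3,D4,D4,D2,D3,D4,D4,D3,D3,D0,D0,D3,D3,D2,D1,D4,D0,D3,D3,D3,D4,D3,D1,D1,D3,D1,D1,D3,D2,D1,D4,D3,D3,D2,D1,D1,D1,D2,D2,D3,D2,D1,D1,D4,D3,D2,D1,D0,D1,D0,D4,D3,D3,D1,D4,D4,D2,D2,D3,D0,D0,D4,D0,D4,D3,D2,D4,D1,D0,D1,D3,D4,D0,D2,D3,D3,D1,D2,D2,D1,D3,D2,D3,D1,D2,D4,D3,D4,D4,D3,D2,D4,D1,D2,D1,D0,D3,D1,D0,D4,D1,D0,D2,D1,D1,D2,D0,D1,D1,D0,D2,D2,D1,D3,D2,D0,D4,D1,D4,D4],[D0,D0,D0,D0,D0,D0,D0,D0,D0,D0,D0,D0,D0,D0,D0,D0,D3,D4,D4,D0,D3,D1,D0,D1,D2,D4,D4,D3,D3,D4,D2,D4,D4,D2,D0,D0,D0,D2,D2,D2,D4,D4,D1,D4,D2,D3,D4,D0,D0,D4,D4,D0,D3,D4,D3,D4,D4,D0,D1,D2,D0,D3,D2,D1,D0,D2,D4,D1,D0,D3,D0,D1,D0,D0,D0,D2,D4,D3,D3,D4,D2,D4,D0,D3,D4,D4,D4,D1,D4,D1,D2,D4,D2,D3,D2,D1,D3,D2,D4,D0,D3,D0,D2,D1,D2,D2,D2,D3,D3,D1,D0,D4,D2,D1,D4,D4,D3,D0,D4,D3,D1,D0,D3,D4,D2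,D4,D3,D0,D2,D3,D0,D3,D3,D4,D1,D0,D3,D2,D2,D2,D0,D4,D3,D2,D2,D0,D2,D0,D3,D1,D2,D2,D0,D2],[D0,D0,D0,D0,D0,D0,D0,D0,D0,D0,D0,D0,D0,D0,D0,D0,D0,D0,D0,D0,D0,D4,D2,D2,D1,D1,D4,D0,D3,D2,D0,D3,D0,D3,D3,D0,D4,D4,D2,D2,D4,D2,D2,D0,D4,D1,D2,D2,D3,D2,D3,D3,D2,D0,D0,D2,D2,D3,D3,D4,D1,D0,D0,D1,D3,D4,D4,D4,D4,D3,D0,D1,D0,D2,D2,D1,D1,D4,D1,D3,D0,D2,D2,D2,D1,D3,D2,D0,D2,D0,D2,D3,D1,D4,D2,D0,D3,D2,D1,D4,D1,D2,D4,D1,D2,D4,D3,D2,D4,D4,D4,D2,D2,D0,D3,D3,D3,D3,D4,D0,D4,D1,D3,D3,D3,D2,D3,D2,D3,D2,D0,D0,D2,D1,D4,D2,D0,D4,D0,D3,D2,D0,D0,D3,D1,D2,D4,D4,D0,D4,D3,D4,D1,D4,D4]]"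

definition B_5t :: "dig list list" where
  "B_5t = [[D3,D4,D4,D0,D3,D1,D0,D0,D2,D4,D2,D0,D3,D1,D2,D1,D2,D3,D4,D0,D3,D2,D2,D0,D1,D0,D1,D4,D0,D0,D3,D0,D1,D3,D4,D0,D4,D4,D1,D0,D2,D3,D2,D2,D0,D2,D0,D1,D4,D3,D3,D2,D0,D0,D3,D1,D3,D1,D2,D2,D4,D2,D2,D0,D2,D2,D2,D2,D0,D1,D4,D0,D4,D1,D2,D0,D4,D1,D4,D4,D0,D1,D4,D1,D1,D3,D3,D2,D4,D2,D1,D3,D1,D0,D0,D0,D0,D2,D1,D2,D0,D3,D2,D2,D2,D4,D3,D0,D4,D3,D1,D2,D2,D0,D1,D0,D0,D2,D2,D1,D4,D1,D4,D4,D4,D2,D3,D0,D3,D3,D3,D0,D4,D0,D3,D3,D1,D0,D3],[D0,D0,D0,D0,D0,D4,D2,D2,D1,D2,D2,D3,D0,D2,D3,D3,D2,D3,D1,D0,D0,D2,D1,D3,D2,D4,D3,D1,D3,D4,D3,D1,D2,D3,D3,D0,D4,D4,D1,D3,D1,D0,D1,D4,D1,D0,D0,D0,D3,D0,D4,D0,D0,D2,D3,D2,D0,D0,D4,D2,D2,D4,D3,D1,D2,D4,D0,D0,D0,D2,D4,D3,D1,D2,D4,D2,D3,D1,D1,D3,D1,D1,D4,D3,D1,D0,D3,D3,D1,D1,D0,D1,D4,D1,D0,D2,D4,D3,D0,D0,D4,D1,D0,D3,D0,D2,D2,D4,D0,D2,D3,D3,D0,D1,D1,D4,D1,D2,D4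,D1,D4,D3,D2,D1,D1,D1,D4,D1,D4,D2,D3,D3,D4,D3,D4,D3,D2,D0,D1,D1],[D0,D0,D0,D0,D0,D0,D0,D0,D2,D1,D3,D4,D0,D2,D3,D2,D3,D0,D2,D3,D4,D3,D1,D1,D3,D0,D0,D1,D4,D4,D0,D3,D0,D4,D4,D3,D2,D3,D4,D0,D1,D3,D1,D3,D0,D1,D1,D2,D1,D3,D4,D4,D4,D3,D3,D3,D0,D4,D1,D3,D3,D0,D0,D2,D2,D0,D2,D3,D1,D2,D1,D0,D3,D4,D2,D1,D3,D1,D2,D2,D4,D1,D2,D1,D2,D3,D1,D2,D3,D2,D0,D4,D1,D4,D3,D4,D3,D1,D3,D2,D4,D4,D2,D4,D1,D3,D0,D4,D3,D0,D3,D0,D3,D0,D0,D1,D3,D2,D3,D0,D1,D1,D2,D0,D3,D4,D2,D2,D0,D4,D4,D3,D2,D1,D4,D1,D4,D2,D2],[D0,D0,D0,D0,D0,D0,D0,D0,D0,D0,D0,D0,D0,D1,D3,D4,D1,D3,D4,D4,D1,D4,D0,D3,D2,D1,D0,D3,D4,D2,D3,D3,D2,D1,D2,D4,D4,D4,D4,D4,D3,D1,D1,D1,D2,D2,D2,D1,D2,D3,D3,D4,D4,D4,D0,D3,D2,D0,D0,D3,D4,D2,D3,D0,D3,D0,D1,D1,D3,D0,D4,D3,D2,D2,D0,D1,D3,D1,D3,D3,D2,D3,D4,D2,D0,D0,D4,D3,D0,D3,D1,D1,D1,D1,D3,D3,D3,D0,D1,D3,D3,D4,D4,D4,D1,D0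,D3,D1,D2,D1,D4,D4,D0,D3,D4,D1,D0,D1,D4,D1,D0,D3,D3,D2,D2,D4,D0,D2,D0,D2,D1,D0,D3,D1,D0,D0,D3,D4,D3,D4]]"

definition G_5t :: "dig list" where
  "G_5t = [D0,D1,D4,D1,D3,D4,D4,D1,D4,D1,D2,D2,D4,D3,D4,D4,D4,D1,D4,D1,D0,D0,D3,D1,D4,D4,D0,D2,D2,D1,D0,D1,D4,D1,D2,D1,D4,D2,D1,D3,D1,D2,D3,D2,D2,D4,D2,D4,D0,D1,D1,D1,D2,D2,D2,D3,D2,D3,D3,D1,D4,D3,D4,D4,D0,D3,D3,D2,D3,D1,D1,D2,D3,D0,D4,D4,D4,D4,D0,D3,D2,D1,D1,D3,D2,D3,D3,D0,D4,D4,D3,D4,D1,D3,D3,D2,D3,D2,D2,D2,D1,D1,D1,D0,D4,D2,D4,D2,D2,D3,D2,D1,D3,D1,D2,D4,D1,D2,D1,D4,D1,D0,D1,D2,D2,D0,D4,D4,D1,D3,D0,D0,D1,D4,D1,D4,D4,D4,D3,D4,D2,D2,D1,D4,D1,D4,D4,D3,D1,D4,D1]"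

definition K_5t :: "dig list" where
  "K_5t = [D0,D1,D4,D2,D0,D1,D1,D1,D1,D1,D1,D0,D2,D4,D1]"

definition Ki_5t :: "int list" where
  "Ki_5t = [0, 1, (-1), (-3), 5, 1, (-9), 6, 6, (-9), 1, 5, (-3), (-1), 1]"

lemma c1_5t: "map trimd (bpadd a5 (bpmul a5 m5 (map (map red5) Pint) A_5t) (bpmul a5 m5 (map (map red5) Qtwo) B_5t)) = G_5t # [[],[],[],[],[],[],[],[],[],[],[]]"
  by (simp add: A_5t_def B_5t_def G_5t_def Pint_def Qtwo_def red5_def)

definition S_5t :: "dig list" where
  "S_5t = [D1,D0,D4,D2,D2,D1,D3,D3,D4,D0,D2,D4,D4,D3,D1,D2,D2,D3,D2,D2,D3,D4,D0,D3,D2,D2,D0,D1,D2,D3,D4,D3,D4,D1,D2,D0,D1,D0,D0,D4,D0,D0,D3,D4,D1,D3,D4,D3,D0,D3,D1,D3,D4,D0,D1,D3,D1,D1,D3,D2,D3,D4,D0,D0,D1,D4,D1,D4,D4,D4,D1,D4,D1,D0,D0,D4,D3,D2,D3,D1,D1,D3,D1,D0,D4,D3,D1,D3,D0,D3,D4,D3,D1,D4,D3,D0,D0,D4,D0,D0,D1,D0,D2,D1,D4,D3,D4,D3,D2,D1,D0,D2,D2,D3,D0,D4,D3,D2,D2,D3,D2,D2,D1,D3,D4,D4,D2,D0,D4,D3,D3,D1,D2,D2,D4,D0,D1]"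

lemma cK_5t: "trimd (pmul a5 m5 K_5t S_5t) = G_5t"
  by (simp add: K_5t_def S_5t_def G_5t_def)

lemma Ki_5t: "map red5 Ki_5t = K_5t"
  by (simp add: K_5t_def Ki_5t_def red5_def)

lemma Kev_5t: "evI Ki_5t x = x * (x - 1) ^ 4 * (x + 1) ^ 5 * (x\<^sup>2 - x + 1) ^ 2"
  by (simp add: Ki_5t_def algebra_simps eval_nat_numeral power2_eq_square)

definition U_5t :: "dig list" where
  "U_5t = [D0,D3,D0,D1,D4,D1,D0,D3,D2,D4,D1,D1,D4,D1,D2,D3,D0,D2,D2,D2,D4,D4,D1,D2,D4,D0,D3,D2,D4,D0,D1,D0,D4,D2,D0,D2,D0,D0,D0,D4,D0,D1,D4,D1,D0,D2,D1,D1,D4,D2,D1,D4,D4,D1,D4,D0,D2,D3,D3,D4,D4,D3,D3,D3,D0,D2,D4,D2,D0,D2,D3,D4,D2,D4,D2,D4,D4,D0,D3,D3,D0,D2,D0,D0,D3,D1,D2,D0,D4,D0,D4,D2,D3,D3,D0,D4,D4,D3,D2,D4,D1,D1,D4,D1,D1,D2,D3,D1,D1,D1,D3,D4,D4,D4,D3,D0,D0,D4,D0,D0,D4,D2,D4,D3,D0,D0,D2,D1,D4,D1,D1,D0,D4,D0,D1,D3,D2,D1,D0,D0,D3,D2,D1,D2,D0,D2,D1,D3,D3,D4,D4,D1,D2,D3,D4,D2,D1,D0,D3,D0,D4,D2,D2,D4,D0,D4,D0,D0,D4,D2,D3,D2,D4,D4,D3,D4,D0,D0,D3,D1,D2,D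1,D1,D2,D0,D2,D4,D0,D2,D1,D3,D2,D1,D2,D1,D0,D2,D0,D1,D1,D1,D4,D3,D2,D0,D3,D4,D1,D4,D3,D1,D3,D4,D1,D1,D4,D2,D3,D2,D3,D2,D3,D0,D1,D4,D1,D4,D0,D0,D0,D0,D4,D4,D2,D2,D4,D1,D0,D4,D4,D1,D2,D1,D4,D4,D4,D3,D4,D3,D4,D1,D4,D3,D2,D0,D3,D4,D0,D1,D3,D1,D2,D3,D3,D0,D1,D4,D4,D2,D2,D4,D3]"

definition V_5t :: "dig list" where
  "V_5t = [D1,D2,D0,D2,D1,D1,D1,D0,D2,D4,D3,D3,D0,D4,D2,D4,D0,D2,D2,D3,D0,D0,D0,D3,D2,D0,D2,D1,D3,D2,D3,D2,D0,D2,D3,D1,D2,D2,D3,D4,D2,D1,D3,D4,D4,D3,D0,D0,D4,D1,D0,D4,D2,D2,D0,D4,D1,D0,D1,D3,D1,D4,D3,D0,D2,D1,D4,D0,D3,D4,D2,D2,D4,D3,D4,D3,D4,D1,D1,D1,D1,D1,D4,D1,D0,D0,D0,D2,D4,D1,D0,D1,D3,D4,D4,D2,D4,D3,D1,D4,D0,D3,D1,D4,D2,D0,D4,D1,D4,D0,D2,D2,D4,D1,D3,D3,D1,D0,D2,D0,D1,D2,D4,D0,D2,D2,D4,D4,D2,D2,D4,D1,D1,D1,D1,D2]"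

lemma c2_5t: "trimd (padd a5 (pmul a5 m5 S_5t U_5t) (pmul a5 m5 (spread 2 D0 (altd n5 S_5t)) V_5t)) = [D1]"
  by (simp add: S_5t_def U_5t_def V_5t_def)

definition A_3f :: "dig list list" where
  "A_3f = [[D2,D0,D0,D0,D0,D0,D1,D1,D0,D0,D0,D0,D1,D2,D2,D1,D1,D0,D0,D0,D1,D0,D1,D0,D1,D0,D2,D0,D0,D0,D0,D2,D2,D0,D0,D0,D2,D2,D0,D1,D0,D0,D2,D1,D1,D0,D1,D0,D2,D1,D0,D2,D1,D2,D2,D2,D1,D0,D2,D2,D1,D1,D0,D1,D0,D2,D0,D0,D0,D2],[D0,D0,D0,D0,D0,D0,D0,D0,D1,D2,D0,D0,D2,D1,D0,D1,D1,D0,D2,D1,D1,D1,D0,D2,D0,D2,D2,D0,D2,D2,D2,D0,D1,D1,D1,D0,D2,D2,D0,D2,D0,D1,D1,D1,D1,D2,D2,D1,D2,D2,D2,D0,D0,D2,D2,D0,D1,D1,D2,D2,D2,D2,D1,D0,D1,D0,D0,D1,D0,D0,D0,D2],[D0,D0,D0,D0,D0,D0,D0,D0,D1,D0,D1,D1,D2,D0,D0,D0,D1,D0,D0,D1,D2,D2,D0,D0,D1,D0,D1,D1,D1,D0,D1,D2,D2,D0,D1,D2,D1,D0,D2,D0,D1,D2,D1,D2,D1,D2,D0,D0,D2,D0,D2,D2,D2,D2,D0,D0,D2,D1,D2,D1,D2,D0,D0,D1,D1,D0,D0,D0,D2,D1],[D0,D0,D0,D0,D0,D0,D0,D0,D0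,D0,D0,D0,D0,D0,D0,D0,D2,D0,D2,D2,D0,D0,D1,D2,D1,D0,D1,D1,D0,D0,D0,D1,D1,D1,D1,D0,D2,D2,D0,D2,D0,D2,D1,D2,D2,D1,D2,D0,D0,D2,D0,D1,D1,D1,D2,D2,D0,D1,D1,D1,D1,D1,D1,D1,D2,D2,D0,D2,D0,D0,D2,D1]]"

definition B_3f :: "dig list list" where
  "B_3f = [[D1,D0,D0,D0,D0,D0,D2,D1,D0,D0,D0,D0,D2,D2,D1,D1,D2,D0,D0,D0,D2,D0,D2,D0,D2,D0,D1,D0,D0,D0,D0,D2,D1,D0,D0,D0,D1,D2,D0,D1,D0,D0,D1,D1,D2,D0,D2,D0,D1,D1,D0,D2,D2,D2,D1,D2,D2,D0,D1,D2,D2,D1,D0,D1,D0,D2,D0,D0,D0,D2],[D0,D0,D0,D0,D0,D0,D0,D0,D2,D2,D0,D0,D1,D1,D0,D1,D2,D0,D1,D1,D2,D1,D0,D2,D0,D2,D1,D0,D1,D2,D1,D0,D2,D1,D2,D0,D1,D2,D0,D2,D0,D1,D2,D1,D2,D2,D1,D1,D1,D2,D1,D0,D0,D2,D1,D0,D2,D1,D1,D2,D1,D2,D2,D0,D2,D0,D0,D1,D0,D0,D0,D2],[D0,D0,D0,D0,D0,D0,D0,D0,D2,D0,D2,D1,D1,D0,D0,D0,D2,D0,D0,D1,D1,D2,D0,D0,D2,D0,D2,D1,D2,D0,D2,D2,D1,D0,D2,D2,D2,D0,D1,D0,D2,D2,D2,D2,D2,D2,D0,D0,D1,D0,D1,D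2,D1,D2,D0,D0,D1,D1,D1,D1,D1,D0,D0,D1,D2,D0,D0,D0,D1,D1],[D0,D0,D0,D0,D0,D0,D0,D0,D0,D0,D0,D0,D0,D0,D0,D0,D1,D0,D1,D2,D0,D0,D2,D2,D2,D0,D2,D1,D0,D0,D0,D1,D2,D1,D2,D0,D1,D2,D0,D2,D0,D2,D2,D2,D1,D1,D1,D0,D0,D2,D0,D1,D2,D1,D1,D2,D0,D1,D2,D1,D2,D1,D2,D1,D1,D2,D0,D2,D0,D0,D1,D1]]"

definition G_3f :: "dig list" where
  "G_3f = [D0,D2,D0,D0,D0,D1,D0,D0,D0,D0,D0,D0,D0,D2,D0,D0,D0,D2,D0,D1,D0,D1,D0,D0,D0,D0,D0,D0,D0,D1,D0,D2,D0,D0,D0,D2,D0,D2,D0,D2,D0,D0,D0,D2,D0,D1,D0,D0,D0,D0,D0,D0,D0,D1,D0,D1,D0,D2,D0,D0,D0,D2,D0,D0,D0,D0,D0,D0,D0,D1,D0,D0,D0,D2]"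

definition K_3f :: "dig list" where
  "K_3f = [D0,D1,D0,D1,D0,D1]"

definition Ki_3f :: "int list" where
  "Ki_3f = [0, 1, 0, (-2), 0, 1]"

lemma c1_3f: "map trimd (bpadd a3 (bpmul a3 m3 (map (map red3) Pint) A_3f) (bpmul a3 m3 (map (map red3) Qfour) B_3f)) = G_3f # [[],[],[],[],[],[],[]]"
  by (simp add: A_3f_def B_3f_def G_3f_def Pint_def Qfour_def red3_def)

definition T_3f :: "dig list" where
  "T_3f = [D2,D1,D1,D1,D1,D1,D0,D2,D0,D2,D2,D2,D2,D2,D0,D0,D0,D2,D0,D0,D0,D2,D2,D2,D2,D2,D0,D2,D0,D1,D1,D1,D1,D1,D2]"

lemma cK_3f: "trimd (pmul a3 m3 K_3f (spread 2 D0 T_3f)) = G_3f"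
  by (simp add: K_3f_def T_3f_def G_3f_def)

lemma Ki_3f: "map red3 Ki_3f = K_3f"
  by (simp add: K_3f_def Ki_3f_def red3_def)

lemma Kev_3f: "evI Ki_3f x = x * (x - 1) ^ 2 * (x + 1) ^ 2"
  by (simp add: Ki_3f_def algebra_simps eval_nat_numeral power2_eq_square)

definition U_3f8 :: "dig list" where
  "U_3f8 = [D1,D2,D0,D0,D0,D1,D0,D1,D0,D0,D2,D2,D1,D1,D2,D2,D0,D2,D1,D0,D2,D2,D1,D2,D2,D2,D2,D0,D1,D1,D0,D2,D2,D2]"

definition V_3f8 :: "dig list" where
  "V_3f8 = [D1,D1,D0,D0,D0,D2,D0,D2,D0,D0,D2,D1,D1,D2,D2,D1,D0,D1,D1,D0,D2,D1,D1,D1,D2,D1,D2,D0,D1,D2,D0,D1,D2,D1]"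

lemma c2_3f8: "trimd (padd a3 (pmul a3 m3 T_3f U_3f8) (pmul a3 m3 (altd n3 T_3f) V_3f8)) = [D1]"
  by (simp add: T_3f_def U_3f8_def V_3f8_def)

definition U_3f4 :: "dig list" where
  "U_3f4 = [D0,D0,D0,D2,D0,D1,D1,D2,D2,D2,D0,D0,D0,D2,D0,D0,D1,D0,D0,D1,D1,D0,D1,D0,D2,D0,D1,D0,D0,D0,D0,D0,D2,D2,D0,D1,D0,D0,D1,D0,D2,D1,D1,D0,D2,D2,D1,D0,D1,D1,D0,D0,D1,D0,D1,D1,D1,D0,D0,D2,D2,D1,D1,D0,D2,D0,D0,D1]"

definition V_3f4 :: "dig list" where
  "V_3f4 = [D2,D0,D1,D1,D0,D0,D1,D0,D1,D0,D2,D2,D0,D2,D0,D2,D1,D2,D0,D2,D2,D1,D1,D0,D2,D2,D2,D2,D2,D0,D1,D2,D1,D2]"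

lemma c2_3f4: "trimd (padd a3 (pmul a3 m3 T_3f U_3f4) (pmul a3 m3 (spread 2 D0 (altd n3 T_3f)) V_3f4)) = [D1]"
  by (simp add: T_3f_def U_3f4_def V_3f4_def)





lemma cop_aux: "coprime (a + k) (k::nat) \<longleftrightarrow> coprime a k"
  by (simp add: coprime_iff_gcd_eq_1)
lemma cop_l1: "odd (m::nat) \<Longrightarrow> coprime (m + 2) (2 * m)"
proof -
  assume m: "odd m"
  have "coprime 2 m" using m by simp
  hence "coprime (2 + m) m" using cop_aux[of 2 m] by simp
  thus ?thesis using m by (simp add: add.commute)
qed
lemma cop_l2: "odd (m::nat) \<Longrightarrow> coprime (m + 4) (2 * m)"
proof -
  assume m: "odd m"
  have "coprime 4 m" using m by (metis coprime_commute coprime_power_left_iff coprime_left_2_iff_odd power2_eq_square numeral_Bit0_eq_double mult_2)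
  hence "coprime (m + 4) m" by (simp add: cop_aux[of 4 m, simplified add.commute] add.commute)
  thus ?thesis using m by simp
qed
lemma cop_l3: "coprime (1 + 2 * q) (4 * (q::nat))"
proof -
  have "coprime (1 + 2 * q) q" by (metis coprime_add_one_left add.commute coprime_mult_left_iff coprime_mult_right_iff mult.commute coprime_commute cop_aux coprime_1_left)
  moreover have "coprime (1 + 2 * q) 4"
    by (metis coprime_commute coprime_power_left_iff coprime_left_2_iff_odd power2_eq_square numeral_Bit0_eq_double mult_2 odd_add even_mult_iff even_numeral odd_one)
  ultimately show ?thesis by simp
qed
lemma cop_l4: "even (q::nat) \<Longrightarrow> coprime (1 + q) (4 * q)"
proof -
  assume q: "even q"
  have "coprime (1 + q) q" using coprime_add_one_left[of q] by (simp add: add.commute)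
  moreover have "coprime (1 + q) 4"
    using q by (metis coprime_commute coprime_power_left_iff coprime_left_2_iff_odd power2_eq_square numeral_Bit0_eq_double mult_2 odd_add odd_one)
  ultimately show ?thesis by simp
qed
lemma cop_l5: "odd (q::nat) \<Longrightarrow> coprime (2 + q) (4 * q)"
proof -
  assume q: "odd q"
  have "coprime 2 q" using q by simp
  hence "coprime (2 + q) q" using cop_aux[of 2 q] by simp
  moreover have "coprime (2 + q) 4"
    using q by (metis coprime_commute coprime_power_left_iff coprime_left_2_iff_odd power2_eq_square numeral_Bit0_eq_double mult_2 odd_add even_numeral)
  ultimately show ?thesis by simp
qed
lemma cop_l6: "odd (b::nat) \<Longrightarrow> coprime 4 b"
  by (metis coprime_power_left_iff coprime_left_2_iff_odd power2_eq_square numeral_Bit0_eq_double mult_2)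

lemma half_neg:
  assumes w: "primitive_root_of_unity b w" and e: "even b"
  shows "w ^ (b div 2) = -1"
proof -
  have b: "b > 0" using w unfolding primitive_root_of_unity_def by auto
  have "(w ^ (b div 2)) ^ 2 = w ^ (b div 2 * 2)" by (simp only: power_mult)
  also have "b div 2 * 2 = b" using e by simp
  also have "w ^ b = 1" using prim_iff[OF w] by simp
  finally have "(w ^ (b div 2)) ^ 2 = 1" .
  hence "w ^ (b div 2) = 1 \<or> w ^ (b div 2) = -1" by (simp add: power2_eq_1_iff)
  moreover have "w ^ (b div 2) \<noteq> 1"
  proof
    assume "w ^ (b div 2) = 1"
    hence "b dvd b div 2" using prim_iff[OF w] by simp
    moreover have "0 < b div 2" "b div 2 < b" using b e by (auto elim: evenE)
    ultimately show False by (auto dest: dvd_imp_le)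
  qed
  ultimately show ?thesis by simp
qed

lemma neg_pow: "primitive_root_of_unity b w \<Longrightarrow> even b \<Longrightarrow> - w = w ^ (1 + b div 2)"
  using half_neg[of b w] by simp

lemma prim_neg4:
  assumes w: "primitive_root_of_unity b w" and d: "4 dvd b"
  shows "primitive_root_of_unity b (- w)"
proof -
  obtain q where q: "b = 4 * q" using d by (auto elim: dvdE)
  have eq: "- w = w ^ (1 + 2 * q)" using neg_pow[OF w] q by simp
  have "coprime (1 + 2 * q) b" using cop_l3[of q] q by simp
  hence "primitive_root_of_unity b (w ^ (1 + 2 * q))" by (rule prim_pow[OF w])
  thus ?thesis by (simp only: eq[symmetric])
qed

lemma negord_odd:
  assumes w: "primitive_root_of_unity b w" and o: "odd b"
  shows "(- w) ^ k = 1 \<longleftrightarrow> 2 * b dvd k"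
proof (cases "even k")
  case True
  then obtain j where j: "k = 2 * j" by (auto elim: evenE)
  have "(- w) ^ k = w ^ k" using True by simp
  moreover have "b dvd k \<longleftrightarrow> 2 * b dvd k"
    using j o by (auto simp: coprime_dvd_mult_right_iff)
  ultimately show ?thesis using prim_iff[OF w] by simp
next
  case False
  have "(- w) ^ k \<noteq> 1"
  proof
    assume "(- w) ^ k = 1"
    hence "- (w ^ k) = 1" using False by simp
    hence wk: "w ^ k = -1" by (metis minus_minus)
    have "w ^ (2 * k) = (w ^ k) ^ 2" by (simp add: power_mult[symmetric] mult.commute)
    hence "w ^ (2 * k) = 1" using wk by simp
    hence "b dvd 2 * k" using prim_iff[OF w] by simp
    hence "b dvd k" using o by (simp add: coprime_dvd_mult_right_iff)
    hence "w ^ k = 1" using prim_iff[OF w] by simp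
    thus False using wk by simp
  qed
  moreover have "\<not> 2 * b dvd k" using False by (auto dest: dvd_mult_left)
  ultimately show ?thesis by simp
qed

lemma negord_two:
  assumes w: "primitive_root_of_unity b w" and b: "b = 2 * m" and o: "odd m"
  shows "(- w) ^ k = 1 \<longleftrightarrow> m dvd k"
proof -
  have e: "- w = w ^ (1 + m)" using neg_pow[OF w] b by simp
  have "(- w) ^ k = w ^ ((1 + m) * k)" by (simp only: e power_mult)
  hence "(- w) ^ k = 1 \<longleftrightarrow> b dvd (1 + m) * k" using prim_iff[OF w] by simp
  moreover obtain h where h: "1 + m = 2 * h" using o by (metis even_add odd_one evenE)
  moreover have "coprime h m"
  proof -
    have "coprime (m + 1) m" by (rule coprime_add_one_left)
    hence "coprime (2 * h) m" using h by (metis add.commute)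
    thus ?thesis using coprime_mult_left_iff by blast
  qed
  ultimately have "(- w) ^ k = 1 \<longleftrightarrow> 2 * m dvd 2 * (h * k)" using b by (metis mult.assoc)
  also have "\<dots> \<longleftrightarrow> m dvd h * k" by simp
  also have "\<dots> \<longleftrightarrow> m dvd k" using coprime_dvd_mult_right_iff[of m h k] \<open>coprime h m\<close> by (simp add: coprime_commute)
  finally show ?thesis .
qed

lemma iv_wm1:
  assumes p: "prime p" and w: "primitive_root_of_unity b w" and wz: "w \<in> zr z"
    and b: "b = p ^ c * m" and pm: "\<not> p dvd m" and m: "m > 1"
  shows "iv p z (w - 1)"
proof -
  have "iv p z (1 - w)" by (rule iv_order[OF p wz prim_iff[OF w] b pm m])
  hence "iv p z (- (1 - w))" by (rule iv_uminus)
  thus ?thesis by simp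
qed

lemma iv_wp1:
  assumes p: "prime p" and wz: "w \<in> zr z" and ord: "\<And>k. (- w) ^ k = 1 \<longleftrightarrow> r dvd k"
    and r: "r = p ^ c * m" and pm: "\<not> p dvd m" and m: "m > 1"
  shows "iv p z (w + 1)"
proof -
  have "iv p z (1 - (- w))" by (rule iv_order[OF p zr_uminus[OF wz] ord r pm m])
  thus ?thesis by (simp add: add.commute)
qed

lemma iv_w:
  assumes p: "prime p" and w: "primitive_root_of_unity b w" and wz: "w \<in> zr z"
  shows "iv p z w"
  using w by (intro iv_root[OF p wz, of b]) (auto simp: primitive_root_of_unity_def)

fun hp :: "int list \<Rightarrow> int \<times> int" where
  "hp [] = (0, 0)"
| "hp (c # cs) = (let (a, b) = hp cs in (c - b, a + b))"

definition mz :: "int \<times> int \<Rightarrow> int \<times> int \<Rightarrow> int \<times> int" where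
  "mz u v = (fst u * fst v - snd u * snd v, fst u * snd v + snd u * fst v + snd u * snd v)"

fun hp2 :: "int list list \<Rightarrow> int \<times> int \<Rightarrow> int \<times> int" where
  "hp2 [] w = (0, 0)"
| "hp2 (r # rs) w = (let h = hp r; m = mz w (hp2 rs w) in (fst h + fst m, snd h + snd m))"

lemma hp_eval: "z ^ 2 = z - 1 \<Longrightarrow> evI cs z = of_int (fst (hp cs)) + of_int (snd (hp cs)) * z"
proof (induction cs)
  case (Cons c cs)
  obtain a b where ab: "hp cs = (a, b)" by fastforce
  have "evI (c # cs) z = of_int c + z * (of_int a + of_int b * z)" using Cons ab by simp
  also have "\<dots> = of_int c + of_int a * z + of_int b * z ^ 2" by (simp add: algebra_simps power2_eq_square)
  also have "\<dots> = of_int (c - b) + of_int (a + b) * z" by (subst Cons.prems) (simp add: algebra_simps)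
  finally show ?case using ab by simp
qed simp

lemma hp2_eval:
  assumes z2: "z ^ 2 = z - 1"
  shows "evI2 rs z (of_int (fst w) + of_int (snd w) * z) = of_int (fst (hp2 rs w)) + of_int (snd (hp2 rs w)) * z"
proof (induction rs)
  case (Cons r rs)
  obtain a b where ab: "hp2 rs w = (a, b)" by fastforce
  have "evI2 (r # rs) z (of_int (fst w) + of_int (snd w) * z)
      = evI r z + (of_int (fst w) + of_int (snd w) * z) * (of_int a + of_int b * z)"
    using Cons ab by simp
  also have "\<dots> = evI r z + (of_int (fst w * a) + of_int (fst w * b + snd w * a) * z + of_int (snd w * b) * z ^ 2)"
    by (simp add: algebra_simps power2_eq_square)
  also have "\<dots> = evI r z + (of_int (fst (mz w (a, b))) + of_int (snd (mz w (a, b))) * z)"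
    by (subst z2) (simp add: mz_def algebra_simps)
  finally show ?case using ab hp_eval[OF z2, of r] by (simp add: Let_def algebra_simps)
qed simp

lemma case_six:
  assumes z: "primitive_root_of_unity 6 z"
  shows "evI2 Pint z (z ^ (2 * t)) \<noteq> 0"
proof -
  have z6: "z ^ 6 = 1" and z1: "z \<noteq> 1" and z2n: "z ^ 2 \<noteq> 1" and z3n: "z ^ 3 \<noteq> 1"
    using z unfolding primitive_root_of_unity_def by auto
  have "(z ^ 3) ^ 2 = 1" using z6 by (simp flip: power_mult)
  hence "z ^ 3 = 1 \<or> z ^ 3 = -1" by (simp only: power2_eq_1_iff)
  hence "z ^ 3 = -1" using z3n by simp
  hence "(z + 1) * (z ^ 2 - z + 1) = 0" by (simp add: algebra_simps power2_eq_square power3_eq_cube)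
  moreover have "z + 1 \<noteq> 0"
  proof
    assume "z + 1 = 0" hence "z = -1" by (simp add: eq_neg_iff_add_eq_0)
    thus False using z2n by simp
  qed
  ultimately have q0: "z ^ 2 - z + 1 = 0" by (metis mult_eq_0_iff)
  have "z ^ 2 = (z ^ 2 - z + 1) + (z - 1)" by simp
  also have "\<dots> = z - 1" using q0 by simp
  finally have zz: "z ^ 2 = z - 1" .
  have y: "z ^ (2 * t) = z ^ (2 * (t mod 3))"
  proof -
    have "2 * t = 6 * (t div 3) + 2 * (t mod 3)" using div_mult_mod_eq[of t 3] by linarith
    hence "z ^ (2 * t) = z ^ (6 * (t div 3) + 2 * (t mod 3))" by (simp only:)
    also have "\<dots> = z ^ (2 * (t mod 3))" by (simp only: power_add power_mult z6 power_one mult_1)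
    finally show ?thesis .
  qed
  have z0: "z \<noteq> 0" using z6 by auto
  have z4: "z ^ 4 = - z"
  proof -
    have "z ^ 4 = (z ^ 2) ^ 2" by (simp flip: power_mult)
    also have "\<dots> = (z - 1) ^ 2" using zz by simp
    also have "\<dots> = z ^ 2 - 2 * z + 1" by (simp add: power2_eq_square algebra_simps)
    also have "\<dots> = - z" using zz by simp
    finally show ?thesis .
  qed
  have key: "evI2 Pint z (of_int (fst w) + of_int (snd w) * z) = of_int (fst (hp2 Pint w)) + of_int (snd (hp2 Pint w)) * z" for w
    by (rule hp2_eval[OF zz])
  have h0: "hp2 Pint (1, 0) = (-3, 0)" by (simp add: Pint_def mz_def)
  have h1: "hp2 Pint (-1, 1) = (0, -3)" by (simp add: Pint_def mz_def)
  have h2: "hp2 Pint (0, -1) = (-3, 3)" by (simp add: Pint_def mz_def)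
  have "t mod 3 = 0 \<or> t mod 3 = 1 \<or> t mod 3 = 2" by arith
  moreover {
    assume "t mod 3 = 0"
    hence "z ^ (2 * t) = of_int (fst (1::int, 0::int)) + of_int (snd (1::int, 0::int)) * z" using y by simp
    hence "evI2 Pint z (z ^ (2 * t)) = -3" using key[of "(1, 0)"] h0 by simp
    hence ?thesis by simp
  } moreover {
    assume "t mod 3 = 1"
    hence "z ^ (2 * t) = of_int (fst (-1::int, 1::int)) + of_int (snd (-1::int, 1::int)) * z" using y zz by simp
    hence "evI2 Pint z (z ^ (2 * t)) = -3 * z" using key[of "(-1, 1)"] h1 by simp
    hence ?thesis using z0 by simp
  } moreover {
    assume "t mod 3 = 2"
    hence "z ^ (2 * t) = of_int (fst (0::int, -1::int)) + of_int (snd (0::int, -1::int)) * z" using y z4 by simp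
    hence "evI2 Pint z (z ^ (2 * t)) = -3 + 3 * z" using key[of "(0, -1)"] h2 by simp
    moreover have "-3 + 3 * z \<noteq> 0" using z1 by auto
    ultimately have ?thesis by simp
  }
  ultimately show ?thesis by auto
qed




lemma ivK:
  assumes "prime p" "iv p z w" "iv p z (w - 1)" "iv p z (w + 1)"
  shows "iv p z (w * (w - 1) ^ e1 * (w + 1) ^ e2)"
  using assms by (intro iv_mult iv_power) auto

lemma ivK6:
  assumes "prime p" "iv p z w" "iv p z (w - 1)" "iv p z (w + 1)" "iv p z (w\<^sup>2 - w + 1)"
  shows "iv p z (w * (w - 1) ^ e1 * (w + 1) ^ e2 * (w\<^sup>2 - w + 1) ^ e3)"
  using assms by (intro iv_mult iv_power) auto

lemma prime3: "prime (3::nat)" by simp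

lemma not_dvd_pow: "prime (p::nat) \<Longrightarrow> prime q \<Longrightarrow> p \<noteq> q \<Longrightarrow> \<not> p dvd q ^ c"
  by (metis prime_dvd_power prime_nat_iff primes_dvd_imp_eq)

theorem mainTheorem5:
  fixes t b :: nat
  assumes "b \<ge> 3"
  shows "\<not> cyclotomic b dvd map_poly of_int (R t)"
proof
  assume dv: "cyclotomic b dvd map_poly of_int (R t)"
  have b0: "b > 0" using assms by simp
  have R0: "evI2 Pint w (w ^ (2 * t)) = 0" if "primitive_root_of_unity b w" for w
    using R_root[OF dv that] R_eval[of t w] by simp
  obtain z where z: "primitive_root_of_unity b z" using prim_exists[OF b0] by blast
  have zz: "z \<in> zr z" by (rule zr_z)
  have zpow: "z ^ k \<in> zr z" for k by (rule zr_pow_z)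
  have "odd b \<or> b mod 4 = 2 \<or> 4 dvd b" by presburger
  moreover {
    assume ob: "odd b"
    have c2: "coprime 2 b" using ob by simp
    have c4: "coprime 4 b" using ob by (rule cop_l6)
    have z2: "primitive_root_of_unity b (z ^ 2)" by (rule prim_pow[OF z c2])
    have z4: "primitive_root_of_unity b (z ^ 4)" by (rule prim_pow[OF z c4])
    obtain c m where bcm: "b = 3 ^ multiplicity 3 b * m" "\<not> 3 dvd m"
      using multiplicity_decompose'[of b 3] b0 by auto
    have mo: "odd m" by (metis bcm(1) even_mult_iff ob)
    have m0: "m \<noteq> 0"
    proof
      assume "m = 0" thus False using bcm(1) b0 by simp
    qed
    have False
    proof (cases "m = 1")
      case False
      hence m1: "m > 1" using m0 by simp
      have iv3: "iv 3 z (w * (w - 1) ^ 7 * (w + 1) ^ 2)"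
        if w: "primitive_root_of_unity b w" "w \<in> zr z" for w
      proof (rule ivK[OF prime3 iv_w[OF prime3 w] iv_wm1[OF prime3 w bcm m1]])
        show "iv 3 z (w + 1)"
        proof (rule iv_wp1[OF prime3 w(2) negord_odd[OF w(1) ob]])
          show "2 * b = 3 ^ multiplicity 3 b * (2 * m)" using bcm(1) by simp
          show "\<not> 3 dvd 2 * m" using bcm(2) by (simp add: prime_dvd_mult_iff[OF prime3])
          show "2 * m > 1" using m1 by simp
        qed
      qed
      show False
        by (rule case_odd[OF okops3 c1_3o _ cK_3o c2_3o Ki_3o Kev_3o R0 z z2 z4
              iv3[OF z zz] iv3[OF z2 zpow]]) simp_all
    next
      case True
      hence b3: "b = 3 ^ multiplicity 3 b" using bcm by simp
      have n5: "\<not> 5 dvd b" using not_dvd_pow[OF prime5 prime3, of "multiplicity 3 b"] b3 by simp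
      have iv5: "iv 5 z (w * (w - 1) ^ 3 * (w + 1) ^ 2)"
        if w: "primitive_root_of_unity b w" "w \<in> zr z" for w
      proof (rule ivK[OF prime5 iv_w[OF prime5 w] iv_wm1[OF prime5 w, of 0 b]])
        show "iv 5 z (w + 1)"
        proof (rule iv_wp1[OF prime5 w(2) negord_odd[OF w(1) ob], of 0 "2 * b"])
          show "\<not> 5 dvd 2 * b" using n5 by (simp add: prime_dvd_mult_iff[OF prime5])
        qed (use assms in auto)
      qed (use assms n5 in auto)
      show False
        by (rule case_odd[OF okops5 c1_5o _ cK_5o c2_5o Ki_5o Kev_5o R0 z z2 z4
              iv5[OF z zz] iv5[OF z2 zpow]]) simp_all
    qed
  }
  moreover {
    assume b4: "b mod 4 = 2"
    define m' where "m' = b div 2"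
    have bm: "b = 2 * m'" using b4 unfolding m'_def by presburger
    have mo: "odd m'" using b4 unfolding m'_def by presburger
    have m3: "m' \<ge> 3" using b4 assms unfolding m'_def by presburger
    have eb: "even b" using bm by simp
    have half: "z ^ m' = -1" using half_neg[OF z eb] unfolding m'_def .
    have e2: "- (z ^ 2) = z ^ (m' + 2)" by (simp only: power_add half) simp
    have e4: "- (z ^ 4) = z ^ (m' + 4)" by (simp only: power_add half) simp
    have z2: "primitive_root_of_unity b (- (z ^ 2))"
      unfolding e2 by (rule prim_pow[OF z]) (use cop_l1[OF mo] bm in simp)
    have z4: "primitive_root_of_unity b (- (z ^ 4))"
      unfolding e4 by (rule prim_pow[OF z]) (use cop_l2[OF mo] bm in simp)
    have z2r: "- (z ^ 2) \<in> zr z" by (rule zr_uminus[OF zpow])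
    obtain m'' where mcm: "m' = 3 ^ multiplicity 3 m' * m''" "\<not> 3 dvd m''"
      using multiplicity_decompose'[of m' 3] m3 by auto
    define c where "c = multiplicity 3 m'"
    have mcm': "m' = 3 ^ c * m''" using mcm(1) unfolding c_def .
    have m0: "m'' \<noteq> 0"
    proof
      assume "m'' = 0" thus False using mcm' m3 by simp
    qed
    have False
    proof (cases "m'' = 1")
      case False
      hence m1: "m'' > 1" using m0 by simp
      have iv3: "iv 3 z (w * (w - 1) ^ 4 * (w + 1) ^ 4)"
        if w: "primitive_root_of_unity b w" "w \<in> zr z" for w
      proof (rule ivK[OF prime3 iv_w[OF prime3 w] iv_wm1[OF prime3 w, of c "2 * m''"]
                iv_wp1[OF prime3 w(2) negord_two[OF w(1) bm mo] mcm' mcm(2) m1]])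
        show "b = 3 ^ c * (2 * m'')" using bm mcm' by simp
        show "\<not> 3 dvd 2 * m''" using mcm(2) by (simp add: prime_dvd_mult_iff[OF prime3])
        show "2 * m'' > 1" using m1 by simp
      qed
      show False
        by (rule case_two[OF okops3 c1_3t _ cK_3t c2_3t Ki_3t Kev_3t R0 z z2 z4
              iv3[OF z zz] iv3[OF z2 z2r]]) simp_all
    next
      case True
      hence m3c: "m' = 3 ^ c" using mcm' by simp
      consider "c = 0" | "c = 1" | "c \<ge> 2" by linarith
      thus False
      proof cases
        case 1 thus False using m3c m3 by simp
      next
        case 2
        hence "b = 6" using m3c bm by simp
        hence "primitive_root_of_unity 6 z" using z by simp
        from case_six[OF this, of t] R0[OF z] show False by simp
      next
        case 3
        have n5m: "\<not> 5 dvd m'" using not_dvd_pow[OF prime5 prime3, of c] m3c by simp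
        have n5: "\<not> 5 dvd b" using n5m bm by (simp add: prime_dvd_mult_iff[OF prime5])
        have iv5: "iv 5 z (w * (w - 1) ^ 4 * (w + 1) ^ 5 * (w\<^sup>2 - w + 1) ^ 2)"
          if w: "primitive_root_of_unity b w" "w \<in> zr z" for w
        proof (rule ivK6[OF prime5 iv_w[OF prime5 w] iv_wm1[OF prime5 w, of 0 b]
                 iv_wp1[OF prime5 w(2) negord_two[OF w(1) bm mo], of 0 m']])
          show "b = 5 ^ 0 * b" by simp
          show "\<not> 5 dvd b" by (rule n5)
          show "b > 1" using assms by simp
          show "m' = 5 ^ 0 * m'" by simp
          show "\<not> 5 dvd m'" by (rule n5m)
          show "m' > 1" using m3 by simp
          define u where "u = (- w) ^ 3"
          have ur: "u \<in> zr z" unfolding u_def by (rule zr_power[OF zr_uminus[OF w(2)]])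
          have uord: "u ^ k = 1 \<longleftrightarrow> 3 ^ (c - 1) dvd k" for k
          proof -
            have "u ^ k = (- w) ^ (3 * k)" unfolding u_def by (simp add: power_mult)
            hence "u ^ k = 1 \<longleftrightarrow> m' dvd 3 * k" using negord_two[OF w(1) bm mo] by simp
            also have "m' = 3 * 3 ^ (c - 1)" using m3c 3 by (cases c) auto
            finally show ?thesis by simp
          qed
          have n5c: "\<not> (5::nat) dvd 3 ^ (c - 1)" by (rule not_dvd_pow[OF prime5 prime3]) simp
          have c1: "3 ^ (c - 1) > (1::nat)" by (rule one_less_power) (use 3 in auto)
          have "iv 5 z (1 - u)" by (rule iv_order[OF prime5 ur uord _ n5c c1, of 0]) simp
          moreover have "1 - u = (w\<^sup>2 - w + 1) * (w + 1)" unfolding u_def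
            by (simp add: algebra_simps power2_eq_square power3_eq_cube)
          ultimately have "iv 5 z ((w\<^sup>2 - w + 1) * (w + 1))" by simp
          thus "iv 5 z (w\<^sup>2 - w + 1)" by (rule iv_factor) (intro zr_add w(2) zr_1)
        qed
        show False
          by (rule case_two[OF okops5 c1_5t _ cK_5t c2_5t Ki_5t Kev_5t R0 z z2 z4
                iv5[OF z zz] iv5[OF z2 z2r]]) simp_all
      qed
    qed
  }
  moreover {
    assume d4: "4 dvd b"
    obtain c m where bcm: "b = 3 ^ multiplicity 3 b * m" "\<not> 3 dvd m"
      using multiplicity_decompose'[of b 3] b0 by auto
    have m0: "m \<noteq> 0"
    proof
      assume "m = 0" thus False using bcm(1) b0 by simp
    qed
    have mn1: "m \<noteq> 1"
    proof
      assume "m = 1"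
      hence bk: "b = 3 ^ multiplicity 3 b" using bcm(1) by simp
      have "odd ((3::nat) ^ multiplicity 3 b)" by simp
      hence "odd b" using bk by metis
      thus False using d4 by (auto elim: dvdE)
    qed
    have m1: "m > 1" using m0 mn1 by simp
    have zm: "primitive_root_of_unity b (- z)" by (rule prim_neg4[OF z d4])
    have iv3: "iv 3 z (w * (w - 1) ^ 2 * (w + 1) ^ 2)"
      if w: "primitive_root_of_unity b w" "w \<in> zr z" for w
      by (rule ivK[OF prime3 iv_w[OF prime3 w] iv_wm1[OF prime3 w bcm m1]
              iv_wp1[OF prime3 w(2) prim_iff[OF prim_neg4[OF w(1) d4]] bcm m1]])
    obtain q where q: "b = 4 * q" using d4 by (auto elim: dvdE)
    have eb: "even b" using q by simp
    have half: "z ^ (2 * q) = -1" using half_neg[OF z eb] q by simp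
    have False
    proof (cases "even q")
      case True
      define z' where "z' = z ^ (1 + q)"
      have z': "primitive_root_of_unity b z'" unfolding z'_def
        by (rule prim_pow[OF z]) (use cop_l4[OF True] q in simp)
      have zm': "primitive_root_of_unity b (- z')" by (rule prim_neg4[OF z' d4])
      have z'r: "z' \<in> zr z" unfolding z'_def by (rule zpow)
      have sq: "z' ^ 2 = - (z ^ 2)"
      proof -
        have "z' ^ 2 = z ^ ((1 + q) * 2)" unfolding z'_def by (simp only: power_mult)
        also have "(1 + q) * 2 = 2 + 2 * q" by simp
        also have "z ^ (2 + 2 * q) = z ^ 2 * z ^ (2 * q)" by (simp only: power_add)
        finally have "z' ^ 2 = z ^ 2 * z ^ (2 * q)" .
        thus ?thesis using half by simp
      qed
      have hX2: "cg (int 3) z (evF (altd n3 T_3f) (z ^ 2)) (evF T_3f (z' ^ 2))"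
        using altd_cg[OF okops3 zpow[of 2], of T_3f] sq by simp
      show False
        by (rule case_four[OF okops3 c1_3f _ cK_3f c2_3f8 hX2 Ki_3f Kev_3f R0 z zm z' zm' z'r
              iv3[OF z zz] iv3[OF z' z'r]]) simp
    next
      case False
      define z' where "z' = z ^ (2 + q)"
      have z': "primitive_root_of_unity b z'" unfolding z'_def
        by (rule prim_pow[OF z]) (use cop_l5[OF False] q in simp)
      have zm': "primitive_root_of_unity b (- z')" by (rule prim_neg4[OF z' d4])
      have z'r: "z' \<in> zr z" unfolding z'_def by (rule zpow)
      have sq: "z' ^ 2 = - ((z ^ 2) ^ 2)"
      proof -
        have "z' ^ 2 = z ^ ((2 + q) * 2)" unfolding z'_def by (simp only: power_mult)
        also have "(2 + q) * 2 = 2 * 2 + 2 * q" by simp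
        also have "z ^ (2 * 2 + 2 * q) = (z ^ 2) ^ 2 * z ^ (2 * q)" by (simp only: power_add power_mult)
        finally have "z' ^ 2 = (z ^ 2) ^ 2 * z ^ (2 * q)" .
        thus ?thesis using half by simp
      qed
      have "evF (spread 2 D0 (altd n3 T_3f)) (z ^ 2) = evF (altd n3 T_3f) ((z ^ 2) ^ 2)"
        by (simp add: evF_spread)
      moreover have "cg (int 3) z (evF (altd n3 T_3f) ((z ^ 2) ^ 2)) (evF T_3f (- ((z ^ 2) ^ 2)))"
        by (rule altd_cg[OF okops3 zr_power[OF zpow]])
      ultimately have hX2: "cg (int 3) z (evF (spread 2 D0 (altd n3 T_3f)) (z ^ 2)) (evF T_3f (z' ^ 2))"
        using sq by simp
      show False
        by (rule case_four[OF okops3 c1_3f _ cK_3f c2_3f4 hX2 Ki_3f Kev_3f R0 z zm z' zm' z'r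
              iv3[OF z zz] iv3[OF z' z'r]]) simp
    qed
  }
  ultimately show False by blast
qed


end
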